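(* Let $\Gamma=([n],w)$ be a connected hypergraph with non-negative weights. Then the $\mathrm{U}(n)$-spectrum of $\Gamma$ has a positive spectral gap: there exists $\varepsilon>0$ such that $\lambda_{\min}(\Gamma,\rho)\ge\varepsilon$ for every non-trivial irreducible representation $\rho$ of $\mathrm{U}(n)$ (equivalently, ${\cal L}(\Gamma)\ge\varepsilon(I-P_{[n]})$ on $L^2(\mathrm{U}(n))$).
   Context: A weighted hypergraph $\Gamma=([n],w)$ assigns $w_B\ge0$ to every $B\subseteq[n]$; it is connected if there is no partition $[n]=E_1\sqcup E_2$ into nonempty sets such that every $B$ with $w_B>0$ lies in $E_1$ or in $E_2$. $\mathrm{U}_B\le\mathrm{U}(n)$ is the subgroup of unitaries coinciding with the identity outside the minor indexed by $B$, with Haar probability $\mu_B$. For a (possibly infinite-dimensional unitary) representation $\rho$, ${\cal L}(\Gamma,\rho)=\sum_Bw_B[I-\int_{\mathrm{U}_B}\rho(A)d\mu_B(A)]$; $\lambda_{\min}(\Gamma,\rho)$ is the smallest eigenvalue for finite-dimensional $\rho$; ${\cal L}(\Gamma)$ is the operator on the regular representation $L^2(\mathrm{U}(n))$, and $P_{[n]}$ is the projection onto constant functions. *)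

theory Defs
  imports "HOL-Probability.Probability"
begin

text \<open>Matrices in U(n) are complex n x n matrices indexed by a finite type 'n
  (n = CARD('n)); the vertex set [n] of the hypergraph is UNIV :: 'n set.\<close>

definition cadj :: "complex^'n^'n \<Rightarrow> complex^'n^'n" where
  "cadj A = (\<chi> i j. cnj (A $ j $ i))"

definition unitary_group :: "(complex^'n^'n) set" where
  "unitary_group = {A. cadj A ** A = mat 1 \<and> A ** cadj A = mat 1}"

definition U_sub :: "'n set \<Rightarrow> (complex^'n^'n::finite) set" where
  "U_sub B = {A \<in> unitary_group.
      \<forall>i j. (i \<notin> B \<or> j \<notin> B) \<longrightarrow> A $ i $ j = (if i = j then 1 else 0)}"

definition haar_prob :: "(complex^'n^'n) set \<Rightarrow> (complex^'n^'n::finite) measure \<Rightarrow> bool" where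
  "haar_prob G \<mu> \<longleftrightarrow> prob_space \<mu> \<and> space \<mu> = G \<and> sets \<mu> = sets (restrict_space borel G) \<and>
     (\<forall>g\<in>G. \<forall>X\<in>sets \<mu>. (\<lambda>A. g ** A) ` X \<in> sets \<mu> \<and>
        emeasure \<mu> ((\<lambda>A. g ** A) ` X) = emeasure \<mu> X)"

definition hypergraph_connected :: "('n set \<Rightarrow> real) \<Rightarrow> bool" where
  "hypergraph_connected w \<longleftrightarrow>
     \<not> (\<exists>E1 E2. E1 \<noteq> {} \<and> E2 \<noteq> {} \<and> E1 \<inter> E2 = {} \<and> E1 \<union> E2 = UNIV \<and>
                (\<forall>B. w B > 0 \<longrightarrow> B \<subseteq> E1 \<or> B \<subseteq> E2))"

type_synonym cmat = "nat \<Rightarrow> nat \<Rightarrow> complex"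
type_synonym cvect = "nat \<Rightarrow> complex"

definition cvec :: "nat \<Rightarrow> cvect set" where
  "cvec d = {v. \<forall>i\<ge>d. v i = 0}"

definition mat_vec :: "nat \<Rightarrow> cmat \<Rightarrow> cvect \<Rightarrow> cvect" where
  "mat_vec d M v = (\<lambda>i. if i < d then (\<Sum>j<d. M i j * v j) else 0)"

definition mat_mul :: "nat \<Rightarrow> cmat \<Rightarrow> cmat \<Rightarrow> cmat" where
  "mat_mul d M N = (\<lambda>i j. \<Sum>k<d. M i k * N k j)"

definition id_mat :: "cmat" where
  "id_mat = (\<lambda>i j. if i = j then 1 else 0)"

definition unitary_mat :: "nat \<Rightarrow> cmat \<Rightarrow> bool" where
  "unitary_mat d M \<longleftrightarrow>
     (\<forall>i<d. \<forall>j<d. (\<Sum>k<d. cnj (M k i) * M k j) = id_mat i j) \<and>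
     (\<forall>i<d. \<forall>j<d. (\<Sum>k<d. M i k * cnj (M j k)) = id_mat i j)"

definition unitary_rep :: "nat \<Rightarrow> (complex^'n^'n \<Rightarrow> cmat) \<Rightarrow> bool" where
  "unitary_rep d \<rho> \<longleftrightarrow> d > 0 \<and>
     (\<forall>A\<in>unitary_group. unitary_mat d (\<rho> A)) \<and>
     (\<forall>A\<in>unitary_group. \<forall>B\<in>unitary_group. \<forall>i<d. \<forall>j<d.
        \<rho> (A ** B) i j = mat_mul d (\<rho> A) (\<rho> B) i j) \<and>
     (\<forall>i<d. \<forall>j<d. continuous_on unitary_group (\<lambda>A. \<rho> A i j))"

definition csubspace_of :: "nat \<Rightarrow> cvect set \<Rightarrow> bool" where
  "csubspace_of d W \<longleftrightarrow> W \<subseteq> cvec d \<and> (\<lambda>_. 0) \<in> W \<and>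
     (\<forall>v\<in>W. \<forall>u\<in>W. (\<lambda>i. v i + u i) \<in> W) \<and> (\<forall>c. \<forall>v\<in>W. (\<lambda>i. c * v i) \<in> W)"

definition irreducible_rep :: "nat \<Rightarrow> (complex^'n^'n \<Rightarrow> cmat) \<Rightarrow> bool" where
  "irreducible_rep d \<rho> \<longleftrightarrow> unitary_rep d \<rho> \<and>
     (\<forall>W. csubspace_of d W \<and> (\<forall>A\<in>unitary_group. \<forall>v\<in>W. mat_vec d (\<rho> A) v \<in> W)
          \<longrightarrow> W = {\<lambda>_. 0} \<or> W = cvec d)"

definition trivial_rep :: "nat \<Rightarrow> (complex^'n^'n \<Rightarrow> cmat) \<Rightarrow> bool" where
  "trivial_rep d \<rho> \<longleftrightarrow> d = 1 \<and> (\<forall>A\<in>unitary_group. \<rho> A 0 0 = 1)"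

definition laplacian :: "('n set \<Rightarrow> real) \<Rightarrow> ('n set \<Rightarrow> (complex^'n^'n::finite) measure)
    \<Rightarrow> (complex^'n^'n \<Rightarrow> cmat) \<Rightarrow> cmat" where
  "laplacian w \<mu> \<rho> = (\<lambda>i j. \<Sum>B\<in>UNIV. complex_of_real (w B) *
       (id_mat i j - (\<integral>A. \<rho> A i j \<partial>(\<mu> B))))"

definition is_eigenvalue :: "nat \<Rightarrow> cmat \<Rightarrow> complex \<Rightarrow> bool" where
  "is_eigenvalue d M k \<longleftrightarrow> (\<exists>v\<in>cvec d. v \<noteq> (\<lambda>_. 0) \<and> mat_vec d M v = (\<lambda>i. k * v i))"

text \<open>Smallest eigenvalue (the matrices considered are Hermitian, so all eigenvalues are real).\<close>
definition lambda_min :: "nat \<Rightarrow> cmat \<Rightarrow> real" where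
  "lambda_min d M = Min {x::real. is_eigenvalue d M (complex_of_real x)}"

end

theory Submission imports Defs "Jordan_Normal_Form.Spectral_Radius" begin

no_notation Matrix.vec_index (infixl "$" 100)



abbreviation Id_n :: "complex^'n^'n" where "Id_n \<equiv> Finite_Cartesian_Product.mat 1"

lemma Id_n_nth[simp]: "(Id_n :: complex^'n^'n) $ i $ j = (if i = j then 1 else 0)"
  by (simp add: Finite_Cartesian_Product.mat_def)

lemma mmult_nth: "(A ** B) $ i $ j = (\<Sum>k\<in>UNIV. A $ i $ k * B $ k $ j)"
  by (simp add: matrix_matrix_mult_def)

lemma mvmult_nth: "(A *v x) $ i = (\<Sum>k\<in>UNIV. A $ i $ k * x $ k)"
  by (simp add: matrix_vector_mult_def)

lemma cadj_nth[simp]: "cadj A $ i $ j = cnj (A $ j $ i)"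
  by (simp add: cadj_def)

lemma cadj_mult: "cadj (A ** B) = cadj B ** cadj (A::complex^'n^'n)"
  by (simp add: Finite_Cartesian_Product.vec_eq_iff mmult_nth mult.commute)

lemma cadj_cadj[simp]: "cadj (cadj A) = A"
  by (simp add: Finite_Cartesian_Product.vec_eq_iff)

lemma cadj_Id[simp]: "cadj (Id_n::complex^'n^'n) = Id_n"
  by (simp add: Finite_Cartesian_Product.vec_eq_iff)

definition blockid :: "'n set \<Rightarrow> complex^'n^'n \<Rightarrow> bool" where
  "blockid K A \<longleftrightarrow> (\<forall>i j. (i \<notin> K \<or> j \<notin> K) \<longrightarrow> A $ i $ j = (if i = j then 1 else 0))"

lemma U_sub_def2: "A \<in> U_sub B \<longleftrightarrow> cadj A ** A = Id_n \<and> A ** cadj A = Id_n \<and> blockid B A"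
  by (simp add: U_sub_def unitary_group_def blockid_def)

lemma blockid_cadj: "blockid K A \<Longrightarrow> blockid K (cadj A)"
  by (auto simp: blockid_def)

lemma blockid_mult_nth:
  fixes A C :: "complex^'n^'n"
  assumes "blockid K A" "blockid K C"
  shows "(A ** C) $ i $ j = (if i \<in> K \<and> j \<in> K then (\<Sum>m\<in>K. A $ i $ m * C $ m $ j) else (if i = j then 1 else 0))"
proof (cases "i \<in> K")
  case iK: True
  show ?thesis
  proof (cases "j \<in> K")
    case True
    have "(A ** C) $ i $ j = (\<Sum>m\<in>UNIV. A $ i $ m * C $ m $ j)" by (simp add: mmult_nth)
    also have "... = (\<Sum>m\<in>K. A $ i $ m * C $ m $ j)"
      by (rule sum.mono_neutral_right) (use assms iK in \<open>auto simp: blockid_def\<close>)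
    finally show ?thesis using iK True by simp
  next
    case False
    have "(A ** C) $ i $ j = (\<Sum>m\<in>UNIV. if m = j then A $ i $ m else 0)"
      unfolding mmult_nth by (rule sum.cong) (use assms False in \<open>auto simp: blockid_def\<close>)
    then show ?thesis using assms False by (simp add: blockid_def)
  qed
next
  case False
  have "(A ** C) $ i $ j = (\<Sum>m\<in>UNIV. if m = i then C $ m $ j else 0)"
    unfolding mmult_nth by (rule sum.cong) (use assms False in \<open>auto simp: blockid_def\<close>)
  then show ?thesis using assms False by (simp add: blockid_def)
qed

lemma blockid_vec:
  fixes A :: "complex^'n^'n"
  assumes "blockid K A"
  shows "(A *v x) $ i = (if i \<in> K then (\<Sum>m\<in>K. A $ i $ m * x $ m) else x $ i)"
proof (cases "i \<in> K")
  case True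
  have "(A *v x) $ i = (\<Sum>m\<in>UNIV. A $ i $ m * x $ m)" by (simp add: mvmult_nth)
  also have "... = (\<Sum>m\<in>K. A $ i $ m * x $ m)"
    by (rule sum.mono_neutral_right) (use assms True in \<open>auto simp: blockid_def\<close>)
  finally show ?thesis using True by simp
next
  case False
  have "(A *v x) $ i = (\<Sum>m\<in>UNIV. if m = i then x $ m else 0)"
    unfolding mvmult_nth by (rule sum.cong) (use assms False in \<open>auto simp: blockid_def\<close>)
  then show ?thesis using False by simp
qed

lemma U_sub_one: "Id_n \<in> U_sub B"
  by (simp add: U_sub_def2 blockid_def)

lemma U_sub_mono:
  assumes "B \<subseteq> C" shows "U_sub B \<subseteq> U_sub C"
proof
  fix A assume A: "A \<in> U_sub B"
  then have "blockid B A" by (simp add: U_sub_def2)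
  then have "blockid C A" using assms unfolding blockid_def by blast
  then show "A \<in> U_sub C" using A by (simp add: U_sub_def2)
qed

lemma U_sub_cadj: "A \<in> U_sub B \<Longrightarrow> cadj A \<in> U_sub B"
  by (auto simp: U_sub_def2 blockid_cadj)

lemma unit_cancel: "cadj A ** A = Id_n \<Longrightarrow> cadj A ** (A ** X) = (X::complex^'n^'n)"
  by (simp add: matrix_mul_assoc)

lemma U_sub_mult:
  assumes "A \<in> U_sub B" "C \<in> U_sub B"
  shows "A ** C \<in> U_sub B"
proof -
  have u: "cadj A ** A = Id_n" "A ** cadj A = Id_n" "cadj C ** C = Id_n" "C ** cadj C = Id_n"
    using assms by (auto simp: U_sub_def2)
  have "cadj (A ** C) ** (A ** C) = Id_n"
    by (simp add: cadj_mult matrix_mul_assoc[symmetric] unit_cancel u)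
  moreover have "(A ** C) ** cadj (A ** C) = Id_n"
  proof -
    have "(A ** C) ** cadj (A ** C) = A ** ((C ** cadj C) ** cadj A)"
      by (simp add: cadj_mult matrix_mul_assoc)
    then show ?thesis by (simp add: u)
  qed
  moreover have "blockid B (A ** C)"
    using assms unfolding U_sub_def2 by (auto simp: blockid_def blockid_mult_nth)
  ultimately show ?thesis by (simp add: U_sub_def2)
qed

lemma U_sub_blockid: "A \<in> U_sub B \<Longrightarrow> blockid B A"
  by (simp add: U_sub_def2)

lemma givens:
  fixes y :: "complex^'n"
  assumes pq: "p \<noteq> q"
  shows "\<exists>c\<in>U_sub {p,q}. (c *v y) $ p = 0 \<and>
           (c *v y) $ q = complex_of_real (sqrt ((cmod (y$p))\<^sup>2 + (cmod (y$q))\<^sup>2))"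
proof (cases "y$p = 0 \<and> y$q = 0")
  case True
  then show ?thesis by (intro bexI[of _ Id_n]) (auto simp: U_sub_one)
next
  case False
  define a where "a = y$p"
  define b where "b = y$q"
  define r where "r = sqrt ((cmod a)\<^sup>2 + (cmod b)\<^sup>2)"
  define R where "R = complex_of_real r"
  have "(cmod a)\<^sup>2 + (cmod b)\<^sup>2 > 0"
  proof (cases "a = 0")
    case True
    then have "b \<noteq> 0" using False by (simp add: a_def b_def)
    then show ?thesis by (simp add: add_nonneg_pos)
  next
    case False
    then show ?thesis by (simp add: add_pos_nonneg)
  qed
  then have rpos: "r > 0" by (simp add: r_def)
  then have R0: "R \<noteq> 0" by (simp add: R_def)
  have cR: "cnj R = R" by (simp add: R_def)
  have rr: "r * r = (cmod a)\<^sup>2 + (cmod b)\<^sup>2"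
    using \<open>(cmod a)\<^sup>2 + (cmod b)\<^sup>2 > 0\<close> by (simp add: r_def)
  have RR: "R * R = a * cnj a + b * cnj b"
  proof -
    have "R * R = complex_of_real (r * r)" by (simp add: R_def)
    also have "... = complex_of_real ((cmod a)\<^sup>2) + complex_of_real ((cmod b)\<^sup>2)" by (simp add: rr)
    also have "... = a * cnj a + b * cnj b" by (simp only: complex_norm_square)
    finally show ?thesis .
  qed
  have S0: "a * cnj a + b * cnj b \<noteq> 0" using RR R0 by (metis mult_eq_0_iff)
  have S1: "cnj a * a + cnj b * b \<noteq> 0" using S0 by (simp add: mult.commute)
  define c :: "complex^'n^'n" where "c = (\<chi> i l. if i = p then (if l = p then b / R else if l = q then - a / R else 0)
      else if i = q then (if l = p then cnj a / R else if l = q then cnj b / R else 0)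
      else (if i = l then 1 else 0))"
  have cnth: "c $ p $ p = b / R" "c $ p $ q = - a / R" "c $ q $ p = cnj a / R" "c $ q $ q = cnj b / R"
    using pq by (auto simp: c_def)
  have bc: "blockid {p,q} c" using pq by (auto simp: blockid_def c_def)
  have bc': "blockid {p,q} (cadj c)" using bc by (rule blockid_cadj)
  have cadjnth: "cadj c $ p $ p = cnj b / R" "cadj c $ p $ q = a / R" "cadj c $ q $ p = - cnj a / R" "cadj c $ q $ q = b / R"
    using pq cR by (auto simp: c_def)
  have fr: "\<And>x y z t. x / R * (y / R) + z / R * (t / R) = (x*y + z*t) / (R*R)"
    using R0 by (simp add: field_simps)
  have n1: "cnj b * b + a * cnj a = R * R" by (simp add: RR algebra_simps)
  have n2: "cnj a * a + cnj b * b = R * R" by (simp add: RR algebra_simps)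
  have n3: "b * cnj b + a * cnj a = R * R" by (simp add: RR algebra_simps)
  have n4: "cnj a * a + b * cnj b = R * R" by (simp add: RR algebra_simps)
  have RR0: "R * R \<noteq> 0" using R0 by simp
  have e1: "cnj b / R * (b / R) + a / R * (cnj a / R) = 1"
    by (simp only: fr n1) (simp add: RR0 R0)
  have e2: "cnj b / R * (- a / R) + a / R * (cnj b / R) = 0"
    by (simp only: fr) (simp add: algebra_simps)
  have e3: "- cnj a / R * (b / R) + b / R * (cnj a / R) = 0"
    by (simp only: fr) (simp add: algebra_simps)
  have e4: "- cnj a / R * (- a / R) + b / R * (cnj b / R) = 1"
  proof -
    have "- cnj a * - a + b * cnj b = R * R" by (simp add: RR algebra_simps)
    then show ?thesis by (simp only: fr) (simp add: RR0 R0)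
  qed
  have e5: "b / R * (cnj b / R) + - a / R * (- cnj a / R) = 1"
  proof -
    have "b * cnj b + - a * - cnj a = R * R" by (simp add: RR algebra_simps)
    then show ?thesis by (simp only: fr) (simp add: RR0 R0)
  qed
  have e6: "b / R * (a / R) + - a / R * (b / R) = 0"
    by (simp only: fr) (simp add: algebra_simps)
  have e7: "cnj a / R * (cnj b / R) + cnj b / R * (- cnj a / R) = 0"
    by (simp only: fr) (simp add: algebra_simps)
  have e8: "cnj a / R * (a / R) + cnj b / R * (b / R) = 1"
    by (simp only: fr n2) (simp add: RR0 R0)
  have u1: "cadj c ** c = Id_n"
    unfolding Finite_Cartesian_Product.vec_eq_iff
    using pq by (auto simp: blockid_mult_nth[OF bc' bc] cnth cadjnth e1 e2 e3 e4 add_divide_distrib[symmetric] n1 n2 n4 RR0 R0 simp del: cadj_nth)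
  have u2: "c ** cadj c = Id_n"
    unfolding Finite_Cartesian_Product.vec_eq_iff
    using pq by (auto simp: blockid_mult_nth[OF bc bc'] cnth cadjnth e5 e6 e7 e8 add_divide_distrib[symmetric] n2 n3 RR0 R0 simp del: cadj_nth)
  have cU: "c \<in> U_sub {p,q}" using u1 u2 bc by (simp add: U_sub_def2)
  have "(c *v y) $ p = b / R * a + - a / R * b"
    using pq by (simp add: blockid_vec[OF bc] cnth a_def b_def)
  also have "... = 0" by (simp add: field_simps)
  finally have vp: "(c *v y) $ p = 0" .
  have "(c *v y) $ q = cnj a / R * a + cnj b / R * b"
    using pq by (simp add: blockid_vec[OF bc] cnth a_def b_def)
  also have "... = (cnj a * a + cnj b * b) / R" using R0 by (simp add: field_simps)
  also have "... = R" using R0 by (simp add: n2)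
  finally have vq: "(c *v y) $ q = complex_of_real (sqrt ((cmod (y$p))\<^sup>2 + (cmod (y$q))\<^sup>2))"
    by (simp add: R_def r_def a_def b_def)
  show ?thesis using cU vp vq by blast
qed


lemma elim_lemma:
  fixes y :: "complex^'n"
  assumes "finite T" "j \<notin> T" "T \<subseteq> S" "j \<in> S"
  shows "\<exists>h\<in>U_sub S. \<forall>i\<in>T. (h *v y) $ i = 0"
  using assms
proof (induction T rule: finite_induct)
  case empty
  then show ?case using U_sub_one by blast
next
  case (insert t T)
  then obtain h' where h': "h' \<in> U_sub S" "\<forall>i\<in>T. (h' *v y) $ i = 0" by auto
  have tj: "t \<noteq> j" using insert by auto
  from givens[OF tj, of "h' *v y"] obtain c where
    c: "c \<in> U_sub {t,j}" "(c *v (h' *v y)) $ t = 0" by auto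
  have "{t,j} \<subseteq> S" using insert by auto
  then have cS: "c \<in> U_sub S" using c(1) U_sub_mono by blast
  have "\<forall>i\<in>insert t T. ((c ** h') *v y) $ i = 0"
  proof
    fix i assume i: "i \<in> insert t T"
    show "((c ** h') *v y) $ i = 0"
    proof (cases "i = t")
      case True
      then show ?thesis using c by (simp add: matrix_vector_mul_assoc[symmetric])
    next
      case False
      then have iT: "i \<in> T" "i \<noteq> j" using i insert by auto
      have "(c *v (h' *v y)) $ i = (h' *v y) $ i"
        using blockid_vec[OF U_sub_blockid[OF c(1)]] iT False by simp
      then show ?thesis using h' iT by (simp add: matrix_vector_mul_assoc[symmetric])
    qed
  qed
  then show ?case using U_sub_mult[OF cS h'(1)] by blast
qed

lemma step_decomp:
  fixes g :: "complex^'n^'n"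
  assumes jS: "j \<in> S" and kS: "k \<notin> S" and g: "g \<in> U_sub (insert k S)"
  shows "\<exists>h c m. h \<in> U_sub S \<and> c \<in> U_sub {j,k} \<and> m \<in> U_sub S \<and> g = h ** c ** m"
proof -
  define u :: "complex^'n" where "u = (\<chi> i. g $ i $ k)"
  obtain h0 where h0: "h0 \<in> U_sub S" "\<forall>i\<in>S-{j}. (h0 *v u) $ i = 0"
    using elim_lemma[of "S - {j}" j S u] jS by auto
  have jk: "j \<noteq> k" using jS kS by auto
  define r where "r = sqrt ((cmod ((h0 *v u)$j))\<^sup>2 + (cmod ((h0 *v u)$k))\<^sup>2)"
  obtain c0 where c0: "c0 \<in> U_sub {j,k}" "(c0 *v (h0 *v u)) $ j = 0"
     "(c0 *v (h0 *v u)) $ k = complex_of_real r"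
    using givens[OF jk, of "h0 *v u"] unfolding r_def by blast
  have r0: "r \<ge> 0" by (simp add: r_def)
  define m where "m = c0 ** h0 ** g"
  have colk: "m $ i $ k = (c0 *v (h0 *v u)) $ i" for i
    by (simp only: m_def matrix_vector_mul_assoc) (simp add: mmult_nth[of "c0 ** h0"] mvmult_nth u_def)
  have bg: "blockid (insert k S) g" using g by (rule U_sub_blockid)
  have bh: "blockid S h0" using h0(1) by (rule U_sub_blockid)
  have bc: "blockid {j,k} c0" using c0(1) by (rule U_sub_blockid)
  have z: "m $ i $ k = (if i = k then complex_of_real r else 0)" for i
  proof (cases "i = k")
    case True then show ?thesis using colk c0 by simp
  next
    case ik: False
    show ?thesis
    proof (cases "i = j")
      case True then show ?thesis using colk c0 ik by simp
    next
      case ij: False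
      have "(c0 *v (h0 *v u)) $ i = (h0 *v u) $ i"
        using blockid_vec[OF bc] ij ik by simp
      also have "... = 0"
      proof (cases "i \<in> S")
        case True then show ?thesis using h0 ij by auto
      next
        case False
        then have "(h0 *v u) $ i = u $ i" using blockid_vec[OF bh] by simp
        also have "... = 0" using bg False ik unfolding blockid_def u_def by auto
        finally show ?thesis .
      qed
      finally show ?thesis using colk ik by simp
    qed
  qed
  have sub1: "{j,k} \<subseteq> insert k S" using jS by auto
  have c0': "c0 \<in> U_sub (insert k S)" by (rule subsetD[OF U_sub_mono[OF sub1] c0(1)])
  have h0': "h0 \<in> U_sub (insert k S)" by (rule subsetD[OF U_sub_mono[OF subset_insertI] h0(1)])
  have mU: "m \<in> U_sub (insert k S)"
    unfolding m_def by (rule U_sub_mult[OF U_sub_mult[OF c0' h0'] g])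
  have mu1: "cadj m ** m = Id_n" using mU by (simp add: U_sub_def2)
  have mu2: "m ** cadj m = Id_n" using mU by (simp add: U_sub_def2)
  have e1: "(cadj m ** m) $ k $ k = 1" using mu1 by simp
  have e2: "(cadj m ** m) $ k $ k = (\<Sum>i\<in>UNIV. cnj (m $ i $ k) * m $ i $ k)"
    by (simp only: mmult_nth cadj_nth)
  have e3: "cnj (m $ i $ k) * m $ i $ k = (if i = k then complex_of_real (r * r) else 0)" for i
    by (simp add: z)
  have "complex_of_real (r * r) = 1"
    using e1 unfolding e2 e3 by simp
  then have "r * r = 1" by (simp only: of_real_eq_1_iff)
  then have "(r - 1) * (r + 1) = 0" by (simp add: algebra_simps)
  then have r1: "r = 1" using r0 by auto
  have zk: "m $ i $ k = (if i = k then 1 else 0)" for i using z r1 by simp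
  have "complex_of_real (\<Sum>l\<in>UNIV. (cmod (m $ k $ l))\<^sup>2) = (\<Sum>l\<in>UNIV. m $ k $ l * cnj (m $ k $ l))"
    by (simp only: of_real_sum complex_norm_square)
  also have "... = (m ** cadj m) $ k $ k" by (simp add: mmult_nth)
  also have "... = 1" using mu2 by simp
  finally have s1: "(\<Sum>l\<in>UNIV. (cmod (m $ k $ l))\<^sup>2) = 1" by (simp only: of_real_eq_1_iff)
  have "(\<Sum>l\<in>UNIV. (cmod (m $ k $ l))\<^sup>2) = (cmod (m $ k $ k))\<^sup>2 + (\<Sum>l\<in>UNIV-{k}. (cmod (m $ k $ l))\<^sup>2)"
    by (rule sum.remove) auto
  then have "(\<Sum>l\<in>UNIV-{k}. (cmod (m $ k $ l))\<^sup>2) = 0" using s1 zk[of k] by simp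
  then have "\<forall>l\<in>UNIV-{k}. (cmod (m $ k $ l))\<^sup>2 = 0"
    using sum_nonneg_eq_0_iff[of "UNIV-{k}" "\<lambda>l. (cmod (m $ k $ l))\<^sup>2"] by simp
  then have rowk: "m $ k $ l = (if k = l then 1 else 0)" for l using zk[of k] by auto
  have bm: "blockid (insert k S) m" using mU by (rule U_sub_blockid)
  have bS: "blockid S m"
    unfolding blockid_def
  proof (intro allI impI)
    fix i l assume "i \<notin> S \<or> l \<notin> S"
    show "m $ i $ l = (if i = l then 1 else 0)"
    proof (cases "i = k")
      case True then show ?thesis using rowk by simp
    next
      case ik: False
      show ?thesis
      proof (cases "l = k")
        case True then show ?thesis using zk ik by simp
      next
        case False
        then have "i \<notin> insert k S \<or> l \<notin> insert k S" using ik \<open>i \<notin> S \<or> l \<notin> S\<close> by simp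
        then show ?thesis using bm unfolding blockid_def by blast
      qed
    qed
  qed
  have mS: "m \<in> U_sub S" unfolding U_sub_def2 using mu1 mu2 bS by (intro conjI)
  have uh: "cadj h0 ** h0 = Id_n" using h0(1) unfolding U_sub_def2 by (elim conjE)
  have uc: "cadj c0 ** c0 = Id_n" using c0(1) unfolding U_sub_def2 by (elim conjE)
  have "cadj h0 ** cadj c0 ** m = cadj h0 ** (cadj c0 ** (c0 ** (h0 ** g)))"
    unfolding m_def by (simp only: matrix_mul_assoc)
  also have "... = g" by (simp only: unit_cancel[OF uc] unit_cancel[OF uh])
  finally have geq: "g = cadj h0 ** cadj c0 ** m" by (rule sym)
  have fin: "cadj h0 \<in> U_sub S \<and> cadj c0 \<in> U_sub {j,k} \<and> m \<in> U_sub S \<and> g = cadj h0 ** cadj c0 ** m"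
    using U_sub_cadj[OF h0(1)] U_sub_cadj[OF c0(1)] mS geq by (intro conjI)
  show ?thesis by (rule exI[of _ "cadj h0"], rule exI[of _ "cadj c0"], rule exI[of _ m], rule fin)
qed

fun gen :: "('n::finite set \<Rightarrow> real) \<Rightarrow> nat \<Rightarrow> (complex^'n^'n) set" where
  "gen w 0 = {Id_n}"
| "gen w (Suc m) = {a ** g | a g B. w B > 0 \<and> a \<in> U_sub B \<and> g \<in> gen w m}"

lemma gen_mult: "g \<in> gen w m \<Longrightarrow> g' \<in> gen w m' \<Longrightarrow> g ** g' \<in> gen w (m + m')"
proof (induction m arbitrary: g)
  case 0 then show ?case by simp
next
  case (Suc m)
  then obtain a h B where "g = a ** h" "w B > 0" "a \<in> U_sub B" "h \<in> gen w m" by auto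
  moreover have "h ** g' \<in> gen w (m + m')" using Suc calculation by blast
  ultimately show ?case by (auto simp: matrix_mul_assoc[symmetric])
qed

lemma gen_U:
  assumes "w B > 0" "a \<in> U_sub B" shows "a \<in> gen w 1"
proof -
  have "\<exists>a' g B'. a = a' ** g \<and> w B' > 0 \<and> a' \<in> U_sub B' \<and> g \<in> gen w 0"
    using assms by (intro exI[of _ a] exI[of _ Id_n] exI[of _ B]) simp
  then show ?thesis by (simp only: One_nat_def gen.simps(2)) blast
qed

lemma conn_cross:
  assumes "hypergraph_connected w" "S \<noteq> {}" "S \<noteq> UNIV"
  shows "\<exists>B. w B > 0 \<and> (\<exists>j\<in>B. j \<in> S) \<and> (\<exists>k\<in>B. k \<notin> S)"
proof (rule ccontr)
  assume "\<not> ?thesis"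
  then have "\<forall>B. w B > 0 \<longrightarrow> B \<subseteq> S \<or> B \<subseteq> - S" by blast
  moreover have "- S \<noteq> {}" using assms(3) by auto
  ultimately have "\<exists>E1 E2. E1 \<noteq> {} \<and> E2 \<noteq> {} \<and> E1 \<inter> E2 = {} \<and> E1 \<union> E2 = UNIV \<and>
                (\<forall>B. w B > 0 \<longrightarrow> B \<subseteq> E1 \<or> B \<subseteq> E2)"
    using assms(2) by (intro exI[of _ S] exI[of _ "- S"]) auto
  then show False using assms(1) unfolding hypergraph_connected_def by blast
qed

lemma gen_all:
  fixes w :: "'n::finite set \<Rightarrow> real"
  assumes n2: "CARD('n) \<ge> 2" and conn: "hypergraph_connected w"
  shows "\<exists>N. unitary_group \<subseteq> gen w N"
proof -
  have main: "m < CARD('n) \<Longrightarrow> \<exists>S N. card S = Suc m \<and> U_sub S \<subseteq> gen w N" for m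
  proof (induction m)
    case 0
    obtain i0 :: 'n where True by simp
    have "{i0} \<noteq> UNIV"
    proof
      assume h: "{i0} = UNIV"
      have "CARD('n) = card {i0}" by (simp only: h)
      then show False using n2 by simp
    qed
    then obtain B where B: "w B > 0" "i0 \<in> B" using conn_cross[OF conn, of "{i0}"] by auto
    have "U_sub {i0} \<subseteq> gen w 1" using U_sub_mono[of "{i0}" B] B gen_U[of w B] by auto
    then show ?case by (intro exI[of _ "{i0}"] exI[of _ 1] conjI) simp_all
  next
    case (Suc m)
    then obtain S N where S: "card S = Suc m" "U_sub S \<subseteq> gen w N" by auto
    have "S \<noteq> UNIV" using Suc.prems S(1) by auto
    moreover have "S \<noteq> {}" using S(1) by auto
    ultimately obtain B j k where B: "w B > 0" "j \<in> B" "j \<in> S" "k \<in> B" "k \<notin> S"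
      using conn_cross[OF conn] by blast
    have "U_sub (insert k S) \<subseteq> gen w (N + 1 + N)"
    proof
      fix g assume "g \<in> U_sub (insert k S)"
      then obtain h c m' where hcm: "h \<in> U_sub S" "c \<in> U_sub {j,k}" "m' \<in> U_sub S" "g = h ** c ** m'"
        using step_decomp[OF B(3) B(5)] by blast
      have "c \<in> U_sub B" using hcm(2) U_sub_mono[of "{j,k}" B] B by auto
      then have c1: "c \<in> gen w 1" using gen_U B(1) by blast
      have hN: "h \<in> gen w N" and mN: "m' \<in> gen w N" using hcm S(2) by auto
      have "h ** c \<in> gen w (N + 1)" by (rule gen_mult[OF hN c1])
      then have "h ** c ** m' \<in> gen w (N + 1 + N)" by (rule gen_mult[OF _ mN])
      then show "g \<in> gen w (N + 1 + N)" using hcm(4) by simp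
    qed
    moreover have "card (insert k S) = Suc (Suc m)" using S(1) B(5) by (simp add: card_insert_disjoint)
    ultimately show ?case by blast
  qed
  have "CARD('n) - 1 < CARD('n)" using n2 by simp
  then obtain S N where S: "card S = Suc (CARD('n) - 1)" "U_sub S \<subseteq> gen w N" using main by blast
  have "card S = CARD('n)" using S(1) n2 by simp
  then have "S = UNIV" by (simp add: card_eq_UNIV_imp_eq_UNIV)
  moreover have "unitary_group = U_sub (UNIV::'n set)" by (simp add: U_sub_def)
  ultimately show ?thesis using S(2) by auto
qed



definition ip :: "nat \<Rightarrow> cvect \<Rightarrow> cvect \<Rightarrow> complex" where
  "ip d x y = (\<Sum>i<d. x i * cnj (y i))"

definition nsq :: "nat \<Rightarrow> cvect \<Rightarrow> real" where
  "nsq d x = (\<Sum>i<d. (cmod (x i))\<^sup>2)"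

definition nrm :: "nat \<Rightarrow> cvect \<Rightarrow> real" where
  "nrm d x = sqrt (nsq d x)"

lemma nsq_nonneg: "nsq d x \<ge> 0"
  by (simp add: nsq_def sum_nonneg)

lemma nrm_nonneg: "nrm d x \<ge> 0"
  by (simp add: nrm_def nsq_nonneg)

lemma nrm_sq: "(nrm d x)\<^sup>2 = nsq d x"
  by (simp add: nrm_def nsq_nonneg)

lemma ip_self: "ip d x x = complex_of_real (nsq d x)"
  by (simp only: ip_def nsq_def of_real_sum complex_norm_square)

lemma nrm_L2: "nrm d x = L2_set (\<lambda>i. cmod (x i)) {..<d}"
  by (simp add: nrm_def nsq_def L2_set_def)

lemma nrm_triangle: "nrm d (\<lambda>i. x i + y i) \<le> nrm d x + nrm d y"
proof -
  have "nrm d (\<lambda>i. x i + y i) \<le> L2_set (\<lambda>i. cmod (x i) + cmod (y i)) {..<d}"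
    unfolding nrm_L2 by (rule L2_set_mono) (auto simp: norm_triangle_ineq)
  also have "... \<le> nrm d x + nrm d y"
    unfolding nrm_L2 by (rule L2_set_triangle_ineq)
  finally show ?thesis .
qed

lemma nrm_cong: "(\<And>i. i < d \<Longrightarrow> x i = y i) \<Longrightarrow> nrm d x = nrm d y"
  by (simp add: nrm_def nsq_def)

lemma nsq_cong: "(\<And>i. i < d \<Longrightarrow> x i = y i) \<Longrightarrow> nsq d x = nsq d y"
  by (simp add: nsq_def)

lemma ip_cong: "(\<And>i. i < d \<Longrightarrow> x i = x' i) \<Longrightarrow> (\<And>i. i < d \<Longrightarrow> y i = y' i) \<Longrightarrow> ip d x y = ip d x' y'"
  by (simp add: ip_def)

lemma nrm_diff_tri: "nrm d (\<lambda>i. x i - z i) \<le> nrm d (\<lambda>i. x i - y i) + nrm d (\<lambda>i. y i - z i)"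
proof -
  have "nrm d (\<lambda>i. x i - z i) = nrm d (\<lambda>i. (x i - y i) + (y i - z i))" by simp
  also have "... \<le> nrm d (\<lambda>i. x i - y i) + nrm d (\<lambda>i. y i - z i)" by (rule nrm_triangle)
  finally show ?thesis .
qed

lemma nrm_sym: "nrm d (\<lambda>i. x i - y i) = nrm d (\<lambda>i. y i - x i)"
  by (simp add: nrm_def nsq_def norm_minus_commute)

lemma nsq_zero_iff: "nsq d x = 0 \<longleftrightarrow> (\<forall>i<d. x i = 0)"
  unfolding nsq_def by (subst sum_nonneg_eq_0_iff) auto

lemma mat_vec_lt: "i < d \<Longrightarrow> mat_vec d M v i = (\<Sum>j<d. M i j * v j)"
  by (simp add: mat_vec_def)

lemma mat_vec_ge: "\<not> i < d \<Longrightarrow> mat_vec d M v i = 0"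
  by (simp add: mat_vec_def)

lemma mat_vec_cvec: "mat_vec d M v \<in> cvec d"
  by (simp add: cvec_def mat_vec_def)

lemma mat_vec_diff: "mat_vec d M (\<lambda>i. x i - y i) = (\<lambda>i. mat_vec d M x i - mat_vec d M y i)"
  by (auto simp: mat_vec_def algebra_simps sum_subtractf)

lemma mat_vec_add: "mat_vec d M (\<lambda>i. x i + y i) = (\<lambda>i. mat_vec d M x i + mat_vec d M y i)"
  by (auto simp: mat_vec_def algebra_simps sum.distrib)

lemma mat_vec_scale: "mat_vec d M (\<lambda>i. c * x i) = (\<lambda>i. c * mat_vec d M x i)"
  by (auto simp: mat_vec_def algebra_simps sum_distrib_left)

lemma mat_vec_zero: "mat_vec d M (\<lambda>_. 0) = (\<lambda>_. 0)"
  by (auto simp: mat_vec_def)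

lemma mat_vec_mul: "mat_vec d (mat_mul d M N) v = mat_vec d M (mat_vec d N v)"
proof
  fix i show "mat_vec d (mat_mul d M N) v i = mat_vec d M (mat_vec d N v) i"
  proof (cases "i < d")
    case True
    have "mat_vec d (mat_mul d M N) v i = (\<Sum>j<d. \<Sum>k<d. M i k * N k j * v j)"
      using True by (simp add: mat_vec_def mat_mul_def sum_distrib_right)
    also have "... = (\<Sum>k<d. \<Sum>j<d. M i k * N k j * v j)" by (rule sum.swap)
    also have "... = mat_vec d M (mat_vec d N v) i"
      using True by (simp add: mat_vec_def sum_distrib_left mult.assoc)
    finally show ?thesis .
  qed (simp add: mat_vec_def)
qed

lemma mat_vec_cong: "(\<And>i j. i < d \<Longrightarrow> j < d \<Longrightarrow> M i j = N i j) \<Longrightarrow> mat_vec d M v = mat_vec d N v"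
  by (auto simp: mat_vec_def)

lemma mat_vec_id: "v \<in> cvec d \<Longrightarrow> mat_vec d id_mat v = v"
proof
  fix i assume v: "v \<in> cvec d"
  show "mat_vec d id_mat v i = v i"
  proof (cases "i < d")
    case True
    have "(\<Sum>j<d. id_mat i j * v j) = (\<Sum>j<d. if j = i then v i else 0)"
      by (rule sum.cong) (auto simp: id_mat_def)
    then show ?thesis using True by (simp add: mat_vec_def)
  next
    case False then show ?thesis using v by (simp add: mat_vec_def cvec_def)
  qed
qed

lemma unitary_ip:
  assumes U: "unitary_mat d M"
  shows "ip d (mat_vec d M x) (mat_vec d M y) = ip d x y"
proof -
  have col: "(\<Sum>i<d. cnj (M i k) * M i j) = id_mat k j" if "k < d" "j < d" for k j
    using U that unfolding unitary_mat_def by blast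
  have "ip d (mat_vec d M x) (mat_vec d M y) = (\<Sum>i<d. \<Sum>j<d. \<Sum>k<d. M i j * x j * (cnj (M i k) * cnj (y k)))"
    by (simp add: ip_def mat_vec_def sum_product)
  also have "... = (\<Sum>j<d. \<Sum>i<d. \<Sum>k<d. M i j * x j * (cnj (M i k) * cnj (y k)))"
    by (rule sum.swap)
  also have "... = (\<Sum>j<d. \<Sum>k<d. \<Sum>i<d. M i j * x j * (cnj (M i k) * cnj (y k)))"
    by (rule sum.cong[OF refl], rule sum.swap)
  also have "... = (\<Sum>j<d. \<Sum>k<d. x j * cnj (y k) * (\<Sum>i<d. cnj (M i k) * M i j))"
    by (simp add: sum_distrib_left mult_ac)
  also have "... = (\<Sum>j<d. \<Sum>k<d. x j * cnj (y k) * id_mat k j)"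
    by (intro sum.cong refl) (simp add: col)
  also have "... = (\<Sum>j<d. x j * cnj (y j))"
  proof (rule sum.cong[OF refl])
    fix j assume j: "j \<in> {..<d}"
    have "(\<Sum>k<d. x j * cnj (y k) * id_mat k j) = (\<Sum>k<d. if k = j then x j * cnj (y j) else 0)"
      by (rule sum.cong) (auto simp: id_mat_def)
    then show "(\<Sum>k<d. x j * cnj (y k) * id_mat k j) = x j * cnj (y j)" using j by simp
  qed
  also have "... = ip d x y" by (simp add: ip_def)
  finally show ?thesis .
qed

lemma unitary_nsq: "unitary_mat d M \<Longrightarrow> nsq d (mat_vec d M x) = nsq d x"
  using unitary_ip[of d M x x] by (simp add: ip_self)

lemma unitary_nrm: "unitary_mat d M \<Longrightarrow> nrm d (mat_vec d M x) = nrm d x"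
  by (simp add: nrm_def unitary_nsq)

lemma unitary_entry_bound:
  assumes U: "unitary_mat d M" and "i < d" "j < d"
  shows "cmod (M i j) \<le> 1"
proof -
  have "(\<Sum>k<d. cnj (M k j) * M k j) = 1"
    using U assms unfolding unitary_mat_def id_mat_def by auto
  then have "complex_of_real (\<Sum>k<d. (cmod (M k j))\<^sup>2) = 1"
    by (simp only: of_real_sum complex_norm_square mult.commute)
  then have s: "(\<Sum>k<d. (cmod (M k j))\<^sup>2) = 1" by (simp only: of_real_eq_1_iff)
  have "(cmod (M i j))\<^sup>2 \<le> (\<Sum>k<d. (cmod (M k j))\<^sup>2)"
    using assms by (intro member_le_sum) auto
  then have "(cmod (M i j))\<^sup>2 \<le> 1" using s by simp
  then show ?thesis by (simp add: power_le_one_iff abs_le_iff)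
qed

lemma nsq_diff_expand:
  "nsq d (\<lambda>i. x i - y i) = nsq d x + nsq d y - 2 * Re (ip d y x)"
proof -
  have "complex_of_real (nsq d (\<lambda>i. x i - y i)) = ip d (\<lambda>i. x i - y i) (\<lambda>i. x i - y i)"
    by (simp add: ip_self)
  also have "... = ip d x x + ip d y y - ip d y x - ip d x y"
    by (simp add: ip_def algebra_simps sum_subtractf sum.distrib)
  also have "... = complex_of_real (nsq d x + nsq d y) - (ip d y x + cnj (ip d y x))"
    by (simp add: ip_self ip_def mult.commute)
  also have "... = complex_of_real (nsq d x + nsq d y - 2 * Re (ip d y x))"
    by (simp add: complex_add_cnj)
  finally show ?thesis by (simp only: of_real_eq_iff)
qed



type_synonym 'n rep = "complex^'n^'n \<Rightarrow> cmat"

lemma unitary_group_U: "unitary_group = U_sub UNIV"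
  by (simp add: U_sub_def)

lemma U_sub_unitary: "U_sub B \<subseteq> unitary_group"
  unfolding unitary_group_U by (rule U_sub_mono) simp

lemma Id_unitary: "Id_n \<in> unitary_group"
  unfolding unitary_group_U by (rule U_sub_one)

lemma rep_unitary: "unitary_rep d \<rho> \<Longrightarrow> A \<in> unitary_group \<Longrightarrow> unitary_mat d (\<rho> A)"
  by (simp add: unitary_rep_def)

lemma rep_mult_vec:
  assumes "unitary_rep d \<rho>" "A \<in> unitary_group" "B \<in> unitary_group"
  shows "mat_vec d (\<rho> (A ** B)) v = mat_vec d (\<rho> A) (mat_vec d (\<rho> B) v)"
proof -
  have "mat_vec d (\<rho> (A ** B)) v = mat_vec d (mat_mul d (\<rho> A) (\<rho> B)) v"
    using assms by (intro mat_vec_cong) (simp add: unitary_rep_def)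
  then show ?thesis by (simp add: mat_vec_mul)
qed

lemma rep_id:
  assumes rep: "unitary_rep d \<rho>" and v: "v \<in> cvec d"
  shows "mat_vec d (\<rho> Id_n) v = v"
proof -
  define u where "u = mat_vec d (\<rho> Id_n) v"
  have "mat_vec d (\<rho> Id_n) u = u"
    using rep_mult_vec[OF rep Id_unitary Id_unitary, of v] by (simp add: u_def)
  then have "mat_vec d (\<rho> Id_n) (\<lambda>i. u i - v i) = (\<lambda>_. 0)"
    by (simp add: mat_vec_diff u_def)
  then have "nsq d (mat_vec d (\<rho> Id_n) (\<lambda>i. u i - v i)) = 0" by (simp add: nsq_def)
  then have "nsq d (\<lambda>i. u i - v i) = 0"
    using unitary_nsq[OF rep_unitary[OF rep Id_unitary]] by simp
  then have "\<forall>i<d. u i = v i" by (simp add: nsq_zero_iff)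
  moreover have "\<forall>i. \<not> i < d \<longrightarrow> u i = v i"
    using v by (simp add: u_def mat_vec_def cvec_def)
  ultimately have "u = v" by auto
  then show ?thesis by (simp add: u_def)
qed

definition dv :: "nat \<Rightarrow> 'n::finite rep \<Rightarrow> cvect \<Rightarrow> complex^'n^'n \<Rightarrow> real" where
  "dv d \<rho> v A = nrm d (\<lambda>i. v i - mat_vec d (\<rho> A) v i)"

lemma dv_nonneg: "dv d \<rho> v A \<ge> 0"
  by (simp add: dv_def nrm_nonneg)

lemma dv_mult:
  assumes rep: "unitary_rep d \<rho>" and A: "A \<in> unitary_group" and B: "B \<in> unitary_group"
  shows "dv d \<rho> v (A ** B) \<le> dv d \<rho> v A + dv d \<rho> v B"
proof -
  have "dv d \<rho> v (A ** B) \<le> nrm d (\<lambda>i. v i - mat_vec d (\<rho> A) v i)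
        + nrm d (\<lambda>i. mat_vec d (\<rho> A) v i - mat_vec d (\<rho> (A ** B)) v i)"
    unfolding dv_def by (rule nrm_diff_tri)
  also have "nrm d (\<lambda>i. mat_vec d (\<rho> A) v i - mat_vec d (\<rho> (A ** B)) v i)
      = nrm d (mat_vec d (\<rho> A) (\<lambda>i. v i - mat_vec d (\<rho> B) v i))"
    by (simp add: rep_mult_vec[OF rep A B] mat_vec_diff)
  also have "... = dv d \<rho> v B"
    by (simp add: dv_def unitary_nrm[OF rep_unitary[OF rep A]])
  finally show ?thesis by (simp add: dv_def)
qed

lemma dv_mult2:
  assumes rep: "unitary_rep d \<rho>" and A: "A \<in> unitary_group" and B: "B \<in> unitary_group"
  shows "dv d \<rho> v A \<le> dv d \<rho> v (A ** B) + dv d \<rho> v B"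
proof -
  have "dv d \<rho> v A \<le> nrm d (\<lambda>i. v i - mat_vec d (\<rho> (A ** B)) v i)
        + nrm d (\<lambda>i. mat_vec d (\<rho> (A ** B)) v i - mat_vec d (\<rho> A) v i)"
    unfolding dv_def by (rule nrm_diff_tri)
  also have "nrm d (\<lambda>i. mat_vec d (\<rho> (A ** B)) v i - mat_vec d (\<rho> A) v i)
      = nrm d (mat_vec d (\<rho> A) (\<lambda>i. mat_vec d (\<rho> B) v i - v i))"
    by (simp add: rep_mult_vec[OF rep A B] mat_vec_diff)
  also have "... = nrm d (\<lambda>i. mat_vec d (\<rho> B) v i - v i)"
    by (simp add: unitary_nrm[OF rep_unitary[OF rep A]])
  also have "... = dv d \<rho> v B"
    by (simp add: dv_def nrm_sym)
  finally show ?thesis by (simp add: dv_def)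
qed

lemma dv_id: "unitary_rep d \<rho> \<Longrightarrow> v \<in> cvec d \<Longrightarrow> dv d \<rho> v Id_n = 0"
  by (simp add: dv_def rep_id nrm_def nsq_def)

lemma gen_unitary: "g \<in> gen w m \<Longrightarrow> g \<in> unitary_group"
proof (induction m arbitrary: g)
  case 0 then show ?case by (simp add: Id_unitary)
next
  case (Suc m)
  then obtain a h B where "g = a ** h" "a \<in> U_sub B" "h \<in> gen w m" by auto
  moreover have "a \<in> U_sub UNIV" using calculation U_sub_mono[of B UNIV] by auto
  moreover have "h \<in> U_sub UNIV" using Suc calculation unitary_group_U by auto
  ultimately show ?case unfolding unitary_group_U by (simp add: U_sub_mult)
qed

lemma gen_bound:
  assumes rep: "unitary_rep d \<rho>" and v: "v \<in> cvec d"
    and bnd: "\<And>B a. w B > 0 \<Longrightarrow> a \<in> U_sub B \<Longrightarrow> dv d \<rho> v a \<le> s"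
  shows "g \<in> gen w m \<Longrightarrow> dv d \<rho> v g \<le> real m * s"
proof (induction m arbitrary: g)
  case 0 then show ?case using dv_id[OF rep v] by simp
next
  case (Suc m)
  then obtain a h B where ah: "g = a ** h" "w B > 0" "a \<in> U_sub B" "h \<in> gen w m" by auto
  have aU: "a \<in> unitary_group" using ah(3) U_sub_unitary by auto
  have hU: "h \<in> unitary_group" using ah(4) by (rule gen_unitary)
  have "dv d \<rho> v g \<le> dv d \<rho> v a + dv d \<rho> v h" unfolding ah(1) by (rule dv_mult[OF rep aU hU])
  also have "... \<le> s + real m * s" using bnd[OF ah(2,3)] Suc.IH[OF ah(4)] by simp
  finally show ?case by (simp add: algebra_simps)
qed

section \<open>Measure theory\<close>

lemma haar_D:
  assumes "haar_prob G \<mu>"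
  shows "prob_space \<mu>" "space \<mu> = G" "sets \<mu> = sets (restrict_space borel G)"
    "\<And>g X. g \<in> G \<Longrightarrow> X \<in> sets \<mu> \<Longrightarrow> emeasure \<mu> ((\<lambda>A. g ** A) ` X) = emeasure \<mu> X"
  using assms unfolding haar_prob_def by auto

lemma cont_meas:
  fixes f :: "complex^'n^'n \<Rightarrow> 'b::topological_space"
  assumes haar: "haar_prob (U_sub B) \<mu>" and f: "continuous_on unitary_group f"
  shows "f \<in> borel_measurable \<mu>"
proof -
  have "continuous_on (U_sub B) f" using f U_sub_unitary by (rule continuous_on_subset)
  then have "f \<in> borel_measurable (restrict_space borel (U_sub B))"
    by (rule borel_measurable_continuous_on_restrict)
  moreover have "measurable \<mu> (borel::'b measure) = measurable (restrict_space borel (U_sub B)) borel"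
    using haar_D(3)[OF haar] by (intro measurable_cong_sets) auto
  ultimately show ?thesis by simp
qed

lemma cont_leftmult: "continuous_on S (\<lambda>A::complex^'n^'n. a ** A)"
  unfolding matrix_matrix_mult_def by (intro continuous_intros)

lemma left_meas:
  assumes haar: "haar_prob (U_sub B) \<mu>" and a: "a \<in> U_sub B"
  shows "(\<lambda>A. a ** A) \<in> measurable \<mu> \<mu>"
proof -
  have "(\<lambda>A. a ** A) \<in> measurable (restrict_space borel (U_sub B)) borel"
    by (rule borel_measurable_continuous_on_restrict[OF cont_leftmult])
  moreover have "(\<lambda>A. a ** A) \<in> space (restrict_space borel (U_sub B)) \<rightarrow> U_sub B"
    using a by (auto simp: space_restrict_space U_sub_mult)
  ultimately have "(\<lambda>A. a ** A) \<in> measurable (restrict_space borel (U_sub B)) (restrict_space borel (U_sub B))"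
    by (simp add: measurable_restrict_space2_iff)
  moreover have "measurable \<mu> \<mu> = measurable (restrict_space borel (U_sub B)) (restrict_space borel (U_sub B))"
    using haar_D(3)[OF haar] by (intro measurable_cong_sets) auto
  ultimately show ?thesis by simp
qed

lemma left_distr:
  assumes haar: "haar_prob (U_sub B) \<mu>" and a: "a \<in> U_sub B"
  shows "distr \<mu> \<mu> (\<lambda>A. a ** A) = \<mu>"
proof (rule measure_eqI)
  show "sets (distr \<mu> \<mu> (\<lambda>A. a ** A)) = sets \<mu>" by simp
next
  fix X assume "X \<in> sets (distr \<mu> \<mu> (\<lambda>A. a ** A))"
  then have X: "X \<in> sets \<mu>" by simp
  then have XG: "X \<subseteq> U_sub B" using sets.sets_into_space haar_D(2)[OF haar] by blast
  have ua: "cadj a ** a = Id_n" "a ** cadj a = Id_n" using a by (auto simp: U_sub_def2)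
  have "(\<lambda>A. a ** A) -` X \<inter> space \<mu> = (\<lambda>A. cadj a ** A) ` X"
  proof
    show "(\<lambda>A. a ** A) -` X \<inter> space \<mu> \<subseteq> (\<lambda>A. cadj a ** A) ` X"
    proof
      fix A assume "A \<in> (\<lambda>A. a ** A) -` X \<inter> space \<mu>"
      then have "a ** A \<in> X" by auto
      moreover have "A = cadj a ** (a ** A)" by (simp add: unit_cancel ua)
      ultimately show "A \<in> (\<lambda>A. cadj a ** A) ` X" by blast
    qed
  next
    show "(\<lambda>A. cadj a ** A) ` X \<subseteq> (\<lambda>A. a ** A) -` X \<inter> space \<mu>"
    proof
      fix A assume "A \<in> (\<lambda>A. cadj a ** A) ` X"
      then obtain x where x: "x \<in> X" "A = cadj a ** x" by auto
      have "a ** A = x" using x(2) by (simp add: matrix_mul_assoc ua)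
      moreover have "A \<in> U_sub B" using x XG U_sub_mult U_sub_cadj a by blast
      ultimately show "A \<in> (\<lambda>A. a ** A) -` X \<inter> space \<mu>" using x haar_D(2)[OF haar] by auto
    qed
  qed
  then have "emeasure (distr \<mu> \<mu> (\<lambda>A. a ** A)) X = emeasure \<mu> ((\<lambda>A. cadj a ** A) ` X)"
    using emeasure_distr[OF left_meas[OF haar a] X] by simp
  also have "... = emeasure \<mu> X" using haar_D(4)[OF haar U_sub_cadj[OF a] X] .
  finally show "emeasure (distr \<mu> \<mu> (\<lambda>A. a ** A)) X = emeasure \<mu> X" .
qed

lemma int_left:
  fixes f :: "complex^'n^'n \<Rightarrow> 'b::{banach, second_countable_topology}"
  assumes haar: "haar_prob (U_sub B) \<mu>" and a: "a \<in> U_sub B" and f: "f \<in> borel_measurable \<mu>"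
  shows "(\<integral>A. f (a ** A) \<partial>\<mu>) = integral\<^sup>L \<mu> f"
  using integral_distr[OF left_meas[OF haar a] f] left_distr[OF haar a] by simp

lemma integrable_left:
  fixes f :: "complex^'n^'n \<Rightarrow> 'b::{banach, second_countable_topology}"
  assumes haar: "haar_prob (U_sub B) \<mu>" and a: "a \<in> U_sub B" and f: "integrable \<mu> f"
  shows "integrable \<mu> (\<lambda>A. f (a ** A))"
  using integrable_distr_eq[OF left_meas[OF haar a] borel_measurable_integrable[OF f]]
    left_distr[OF haar a] f by simp


section \<open>Integrals of representations\<close>

lemma haar_finite: "haar_prob G \<mu> \<Longrightarrow> finite_measure \<mu>"
  using haar_D(1) prob_space_def by blast

lemma rep_entry_meas:
  assumes rep: "unitary_rep d \<rho>" and haar: "haar_prob (U_sub B) \<mu>" and ij: "i < d" "j < d"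
  shows "(\<lambda>A. \<rho> A i j) \<in> borel_measurable \<mu>"
  using rep ij by (intro cont_meas[OF haar]) (simp add: unitary_rep_def)

lemma rep_integrable:
  assumes rep: "unitary_rep d \<rho>" and haar: "haar_prob (U_sub B) \<mu>" and ij: "i < d" "j < d"
  shows "integrable \<mu> (\<lambda>A. \<rho> A i j)"
proof (rule finite_measure.integrable_const_bound[OF haar_finite[OF haar], where B=1])
  show "AE x in \<mu>. norm (\<rho> x i j) \<le> 1"
  proof (rule AE_I2)
    fix x assume "x \<in> space \<mu>"
    then have "x \<in> unitary_group" using haar_D(2)[OF haar] U_sub_unitary by auto
    then show "norm (\<rho> x i j) \<le> 1" using unitary_entry_bound[OF rep_unitary[OF rep] ij] by simp
  qed
  show "(\<lambda>A. \<rho> A i j) \<in> borel_measurable \<mu>" by (rule rep_entry_meas[OF rep haar ij])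
qed

lemma ip_mat_vec_expand:
  "ip d (mat_vec d M x) y = (\<Sum>i<d. \<Sum>j<d. M i j * (x j * cnj (y i)))"
  by (simp add: ip_def mat_vec_def sum_distrib_right mult.assoc)

lemma ip_integrable:
  assumes rep: "unitary_rep d \<rho>" and haar: "haar_prob (U_sub B) \<mu>"
  shows "integrable \<mu> (\<lambda>A. ip d (mat_vec d (\<rho> A) x) y)"
  unfolding ip_mat_vec_expand
  by (intro Bochner_Integration.integrable_sum Bochner_Integration.integrable_mult_left rep_integrable[OF rep haar]) auto

definition Pmat :: "(complex^'n^'n) measure \<Rightarrow> 'n::finite rep \<Rightarrow> cmat" where
  "Pmat \<mu> \<rho> = (\<lambda>i j. \<integral>A. \<rho> A i j \<partial>\<mu>)"

lemma int_ip:
  assumes rep: "unitary_rep d \<rho>" and haar: "haar_prob (U_sub B) \<mu>"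
  shows "ip d (mat_vec d (Pmat \<mu> \<rho>) x) y = (\<integral>A. ip d (mat_vec d (\<rho> A) x) y \<partial>\<mu>)"
proof -
  have "(\<integral>A. ip d (mat_vec d (\<rho> A) x) y \<partial>\<mu>) = (\<integral>A. (\<Sum>i<d. \<Sum>j<d. \<rho> A i j * (x j * cnj (y i))) \<partial>\<mu>)"
    by (simp only: ip_mat_vec_expand)
  also have "... = (\<Sum>i<d. \<integral>A. (\<Sum>j<d. \<rho> A i j * (x j * cnj (y i))) \<partial>\<mu>)"
    by (rule Bochner_Integration.integral_sum)
       (intro Bochner_Integration.integrable_sum Bochner_Integration.integrable_mult_left rep_integrable[OF rep haar], auto)
  also have "... = (\<Sum>i<d. \<Sum>j<d. \<integral>A. \<rho> A i j * (x j * cnj (y i)) \<partial>\<mu>)"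
    by (intro sum.cong refl Bochner_Integration.integral_sum)
       (intro Bochner_Integration.integrable_mult_left rep_integrable[OF rep haar], auto)
  also have "... = (\<Sum>i<d. \<Sum>j<d. Pmat \<mu> \<rho> i j * (x j * cnj (y i)))"
    by (simp add: Pmat_def)
  also have "... = ip d (mat_vec d (Pmat \<mu> \<rho>) x) y"
    by (simp only: ip_mat_vec_expand)
  finally show ?thesis by simp
qed

lemma Pm_entry_fix:
  assumes rep: "unitary_rep d \<rho>" and haar: "haar_prob (U_sub B) \<mu>" and a: "a \<in> U_sub B"
    and ij: "i < d" "j < d"
  shows "mat_mul d (\<rho> a) (Pmat \<mu> \<rho>) i j = Pmat \<mu> \<rho> i j"
proof -
  have aU: "a \<in> unitary_group" using a U_sub_unitary by auto
  have "mat_mul d (\<rho> a) (Pmat \<mu> \<rho>) i j = (\<Sum>k<d. \<integral>A. \<rho> a i k * \<rho> A k j \<partial>\<mu>)"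
    by (simp add: mat_mul_def Pmat_def)
  also have "... = (\<integral>A. (\<Sum>k<d. \<rho> a i k * \<rho> A k j) \<partial>\<mu>)"
    by (rule Bochner_Integration.integral_sum[symmetric])
       (intro Bochner_Integration.integrable_mult_right rep_integrable[OF rep haar], auto simp: ij)
  also have "... = (\<integral>A. \<rho> (a ** A) i j \<partial>\<mu>)"
  proof (rule Bochner_Integration.integral_cong[OF refl])
    fix A assume "A \<in> space \<mu>"
    then have "A \<in> unitary_group" using haar_D(2)[OF haar] U_sub_unitary by auto
    then show "(\<Sum>k<d. \<rho> a i k * \<rho> A k j) = \<rho> (a ** A) i j"
      using rep aU ij by (simp add: unitary_rep_def mat_mul_def)
  qed
  also have "... = (\<integral>A. \<rho> A i j \<partial>\<mu>)"
    by (rule int_left[OF haar a rep_entry_meas[OF rep haar ij]])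
  finally show ?thesis by (simp add: Pmat_def)
qed

lemma Pm_fix:
  assumes rep: "unitary_rep d \<rho>" and haar: "haar_prob (U_sub B) \<mu>" and a: "a \<in> U_sub B"
  shows "mat_vec d (\<rho> a) (mat_vec d (Pmat \<mu> \<rho>) x) = mat_vec d (Pmat \<mu> \<rho>) x"
proof -
  have "mat_vec d (\<rho> a) (mat_vec d (Pmat \<mu> \<rho>) x) = mat_vec d (mat_mul d (\<rho> a) (Pmat \<mu> \<rho>)) x"
    by (simp add: mat_vec_mul)
  also have "... = mat_vec d (Pmat \<mu> \<rho>) x"
    by (intro mat_vec_cong Pm_entry_fix[OF rep haar a])
  finally show ?thesis .
qed

lemma lap_row:
  assumes v: "v \<in> cvec d" and i: "i < d"
  shows "mat_vec d (laplacian w \<mu> \<rho>) v i =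
     (\<Sum>B\<in>UNIV. complex_of_real (w B) * (v i - mat_vec d (Pmat (\<mu> B) \<rho>) v i))"
proof -
  have e: "laplacian w \<mu> \<rho> i j * v j = (\<Sum>B\<in>UNIV. complex_of_real (w B) * (id_mat i j * v j - Pmat (\<mu> B) \<rho> i j * v j))" for j
    unfolding laplacian_def Pmat_def sum_distrib_right by (rule sum.cong[OF refl]) (simp add: algebra_simps)
  have "mat_vec d (laplacian w \<mu> \<rho>) v i =
      (\<Sum>j<d. \<Sum>B\<in>UNIV. complex_of_real (w B) * (id_mat i j * v j - Pmat (\<mu> B) \<rho> i j * v j))"
    using i by (simp add: mat_vec_def e)
  also have "... = (\<Sum>B\<in>UNIV. \<Sum>j<d. complex_of_real (w B) * (id_mat i j * v j - Pmat (\<mu> B) \<rho> i j * v j))"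
    by (rule sum.swap)
  also have "... = (\<Sum>B\<in>UNIV. complex_of_real (w B) * ((\<Sum>j<d. id_mat i j * v j) - (\<Sum>j<d. Pmat (\<mu> B) \<rho> i j * v j)))"
    by (simp add: right_diff_distrib sum_distrib_left sum_subtractf mult.assoc)
  also have "... = (\<Sum>B\<in>UNIV. complex_of_real (w B) * (v i - mat_vec d (Pmat (\<mu> B) \<rho>) v i))"
  proof -
    have "(\<Sum>j<d. id_mat i j * v j) = v i"
      using mat_vec_id[OF v] i by (metis mat_vec_lt)
    then show ?thesis using i by (simp add: mat_vec_def)
  qed
  finally show ?thesis .
qed

lemma lap_ip:
  assumes v: "v \<in> cvec d"
  shows "ip d (mat_vec d (laplacian w \<mu> \<rho>) v) v =
     (\<Sum>B\<in>UNIV. complex_of_real (w B) * (ip d v v - ip d (mat_vec d (Pmat (\<mu> B) \<rho>) v) v))"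
proof -
  have "ip d (mat_vec d (laplacian w \<mu> \<rho>) v) v =
     (\<Sum>i<d. \<Sum>B\<in>UNIV. complex_of_real (w B) * (v i - mat_vec d (Pmat (\<mu> B) \<rho>) v i) * cnj (v i))"
    unfolding ip_def by (intro sum.cong refl) (simp add: lap_row[OF v] sum_distrib_right)
  also have "... = (\<Sum>B\<in>UNIV. \<Sum>i<d. complex_of_real (w B) * (v i - mat_vec d (Pmat (\<mu> B) \<rho>) v i) * cnj (v i))"
    by (rule sum.swap)
  also have "... = (\<Sum>B\<in>UNIV. complex_of_real (w B) * (ip d v v - ip d (mat_vec d (Pmat (\<mu> B) \<rho>) v) v))"
  proof (rule sum.cong[OF refl])
    fix B
    have "ip d v v - ip d (mat_vec d (Pmat (\<mu> B) \<rho>) v) v = (\<Sum>i<d. (v i - mat_vec d (Pmat (\<mu> B) \<rho>) v i) * cnj (v i))"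
      by (simp add: ip_def sum_subtractf left_diff_distrib)
    then show "(\<Sum>i<d. complex_of_real (w B) * (v i - mat_vec d (Pmat (\<mu> B) \<rho>) v i) * cnj (v i)) =
        complex_of_real (w B) * (ip d v v - ip d (mat_vec d (Pmat (\<mu> B) \<rho>) v) v)"
      by (simp add: sum_distrib_left mult.assoc)
  qed
  finally show ?thesis .
qed

definition Fint :: "(complex^'n^'n) measure \<Rightarrow> 'n::finite rep \<Rightarrow> nat \<Rightarrow> cvect \<Rightarrow> real" where
  "Fint \<mu> \<rho> d v = (\<integral>A. (dv d \<rho> v A)\<^sup>2 \<partial>\<mu>)"

lemma dv_sq: "(dv d \<rho> v A)\<^sup>2 = nsq d (\<lambda>i. v i - mat_vec d (\<rho> A) v i)"
  unfolding dv_def by (rule nrm_sq)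

lemma dv_sq_expr:
  assumes rep: "unitary_rep d \<rho>" and A: "A \<in> unitary_group"
  shows "(dv d \<rho> v A)\<^sup>2 = 2 * nsq d v - 2 * Re (ip d (mat_vec d (\<rho> A) v) v)"
  unfolding dv_sq nsq_diff_expand unitary_nsq[OF rep_unitary[OF rep A]] by simp

lemma dv_sq_integrable:
  assumes rep: "unitary_rep d \<rho>" and haar: "haar_prob (U_sub B) \<mu>"
  shows "integrable \<mu> (\<lambda>A. (dv d \<rho> v A)\<^sup>2)"
proof -
  have "integrable \<mu> (\<lambda>A. 2 * nsq d v - 2 * Re (ip d (mat_vec d (\<rho> A) v) v))"
    using ip_integrable[OF rep haar] finite_measure.integrable_const[OF haar_finite[OF haar]]
    by (intro Bochner_Integration.integrable_diff Bochner_Integration.integrable_mult_right integrable_Re) auto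
  moreover have "integrable \<mu> (\<lambda>A. (dv d \<rho> v A)\<^sup>2) \<longleftrightarrow> integrable \<mu> (\<lambda>A. 2 * nsq d v - 2 * Re (ip d (mat_vec d (\<rho> A) v) v))"
  proof (rule Bochner_Integration.integrable_cong[OF refl])
    fix A assume "A \<in> space \<mu>"
    then have "A \<in> unitary_group" using haar_D(2)[OF haar] U_sub_unitary by auto
    then show "(dv d \<rho> v A)\<^sup>2 = 2 * nsq d v - 2 * Re (ip d (mat_vec d (\<rho> A) v) v)"
      by (rule dv_sq_expr[OF rep])
  qed
  ultimately show ?thesis by simp
qed

lemma Fint_expr:
  assumes rep: "unitary_rep d \<rho>" and haar: "haar_prob (U_sub B) \<mu>"
  shows "Fint \<mu> \<rho> d v = 2 * nsq d v - 2 * Re (ip d (mat_vec d (Pmat \<mu> \<rho>) v) v)"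
proof -
  have P: "prob_space \<mu>" by (rule haar_D(1)[OF haar])
  have "Fint \<mu> \<rho> d v = (\<integral>A. 2 * nsq d v - 2 * Re (ip d (mat_vec d (\<rho> A) v) v) \<partial>\<mu>)"
    unfolding Fint_def
  proof (rule Bochner_Integration.integral_cong[OF refl])
    fix A assume "A \<in> space \<mu>"
    then have "A \<in> unitary_group" using haar_D(2)[OF haar] U_sub_unitary by auto
    then show "(dv d \<rho> v A)\<^sup>2 = 2 * nsq d v - 2 * Re (ip d (mat_vec d (\<rho> A) v) v)"
      by (rule dv_sq_expr[OF rep])
  qed
  also have "... = 2 * nsq d v - 2 * (\<integral>A. Re (ip d (mat_vec d (\<rho> A) v) v) \<partial>\<mu>)"
    using ip_integrable[OF rep haar] finite_measure.integrable_const[OF haar_finite[OF haar]]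
      prob_space.prob_space[OF P]
    by (subst Bochner_Integration.integral_diff) auto
  also have "... = 2 * nsq d v - 2 * Re (ip d (mat_vec d (Pmat \<mu> \<rho>) v) v)"
    using integral_Re[OF ip_integrable[OF rep haar]] int_ip[OF rep haar] by simp
  finally show ?thesis .
qed

lemma Fint_nonneg: "Fint \<mu> \<rho> d v \<ge> 0"
  unfolding Fint_def by (rule Bochner_Integration.integral_nonneg) simp

lemma pointwise_bound:
  assumes rep: "unitary_rep d \<rho>" and haar: "haar_prob (U_sub B) \<mu>" and a: "a \<in> U_sub B"
  shows "(dv d \<rho> v a)\<^sup>2 \<le> 4 * Fint \<mu> \<rho> d v"
proof -
  have P: "prob_space \<mu>" by (rule haar_D(1)[OF haar])
  have aU: "a \<in> unitary_group" using a U_sub_unitary by auto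
  have I1: "integrable \<mu> (\<lambda>b. (dv d \<rho> v b)\<^sup>2)" by (rule dv_sq_integrable[OF rep haar])
  have I2: "integrable \<mu> (\<lambda>b. (dv d \<rho> v (a ** b))\<^sup>2)"
    by (rule integrable_left[OF haar a I1])
  have pw: "(dv d \<rho> v a)\<^sup>2 \<le> 2 * (dv d \<rho> v (a ** b))\<^sup>2 + 2 * (dv d \<rho> v b)\<^sup>2"
    if "b \<in> space \<mu>" for b
  proof -
    have "b \<in> unitary_group" using that haar_D(2)[OF haar] U_sub_unitary by auto
    then have t: "dv d \<rho> v a \<le> dv d \<rho> v (a ** b) + dv d \<rho> v b" by (rule dv_mult2[OF rep aU])
    have "(dv d \<rho> v a)\<^sup>2 \<le> (dv d \<rho> v (a ** b) + dv d \<rho> v b)\<^sup>2"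
      using t dv_nonneg by (intro power_mono) auto
    also have "... \<le> 2 * (dv d \<rho> v (a ** b))\<^sup>2 + 2 * (dv d \<rho> v b)\<^sup>2"
    proof -
      define X where "X = dv d \<rho> v (a ** b)"
      define Y where "Y = dv d \<rho> v b"
      have "0 \<le> (X - Y)\<^sup>2" by simp
      moreover have "(X + Y)\<^sup>2 = X\<^sup>2 + 2*X*Y + Y\<^sup>2" "(X - Y)\<^sup>2 = X\<^sup>2 - 2*X*Y + Y\<^sup>2"
        by (simp_all add: power2_eq_square algebra_simps)
      ultimately have "(X + Y)\<^sup>2 \<le> 2 * X\<^sup>2 + 2 * Y\<^sup>2" by linarith
      then show ?thesis by (simp add: X_def Y_def)
    qed
    finally show ?thesis .
  qed
  have J: "(\<integral>b. (dv d \<rho> v (a ** b))\<^sup>2 \<partial>\<mu>) = Fint \<mu> \<rho> d v"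
    unfolding Fint_def by (rule int_left[OF haar a borel_measurable_integrable[OF I1]])
  have "(dv d \<rho> v a)\<^sup>2 = (\<integral>b. (dv d \<rho> v a)\<^sup>2 \<partial>\<mu>)"
    using prob_space.prob_space[OF P] by simp
  also have "... \<le> (\<integral>b. 2 * (dv d \<rho> v (a ** b))\<^sup>2 + 2 * (dv d \<rho> v b)\<^sup>2 \<partial>\<mu>)"
  proof (rule Bochner_Integration.integral_mono)
    show "integrable \<mu> (\<lambda>b. (dv d \<rho> v a)\<^sup>2)"
      by (rule finite_measure.integrable_const[OF haar_finite[OF haar]])
    show "integrable \<mu> (\<lambda>b. 2 * (dv d \<rho> v (a ** b))\<^sup>2 + 2 * (dv d \<rho> v b)\<^sup>2)"
      by (rule Bochner_Integration.integrable_add[OF Bochner_Integration.integrable_mult_right[OF I2] Bochner_Integration.integrable_mult_right[OF I1]])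
    show "\<And>b. b \<in> space \<mu> \<Longrightarrow> (dv d \<rho> v a)\<^sup>2 \<le> 2 * (dv d \<rho> v (a ** b))\<^sup>2 + 2 * (dv d \<rho> v b)\<^sup>2"
      by (rule pw)
  qed
  also have "... = (\<integral>b. 2 * (dv d \<rho> v (a ** b))\<^sup>2 \<partial>\<mu>) + (\<integral>b. 2 * (dv d \<rho> v b)\<^sup>2 \<partial>\<mu>)"
    by (rule Bochner_Integration.integral_add[OF Bochner_Integration.integrable_mult_right[OF I2] Bochner_Integration.integrable_mult_right[OF I1]])
  also have "... = 2 * (\<integral>b. (dv d \<rho> v (a ** b))\<^sup>2 \<partial>\<mu>) + 2 * Fint \<mu> \<rho> d v"
    by (simp only: integral_mult_right_zero Fint_def)
  also have "... = 4 * Fint \<mu> \<rho> d v"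
    by (simp add: J)
  finally show ?thesis .
qed



lemma ip_sym: "ip d x y = cnj (ip d y x)"
  by (simp add: ip_def mult.commute)

lemma ip_diff_left: "ip d (\<lambda>i. x i - y i) z = ip d x z - ip d y z"
  by (simp add: ip_def sum_subtractf left_diff_distrib)

lemma ip_diff_right: "ip d z (\<lambda>i. x i - y i) = ip d z x - ip d z y"
  by (simp add: ip_def sum_subtractf right_diff_distrib)

lemma ip_scale_left: "ip d (\<lambda>i. c * x i) z = c * ip d x z"
  by (simp add: ip_def sum_distrib_left mult.assoc)

lemma nsq_pos: "v \<in> cvec d \<Longrightarrow> v \<noteq> (\<lambda>_. 0) \<Longrightarrow> nsq d v > 0"
proof -
  assume v: "v \<in> cvec d" "v \<noteq> (\<lambda>_. 0)"
  then obtain i where i: "v i \<noteq> 0" by auto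
  have "i < d"
  proof (rule ccontr)
    assume "\<not> i < d"
    then have "v i = 0" using v(1) by (simp add: cvec_def)
    then show False using i by simp
  qed
  then have "nsq d v \<noteq> 0" using i by (auto simp: nsq_zero_iff)
  then show ?thesis using nsq_nonneg[of d v] by linarith
qed

lemma ip_P_real:
  assumes rep: "unitary_rep d \<rho>" and haar: "haar_prob (U_sub B) \<mu>"
  shows "Im (ip d (mat_vec d (Pmat \<mu> \<rho>) v) v) = 0"
proof -
  have P: "prob_space \<mu>" by (rule haar_D(1)[OF haar])
  define u where "u = mat_vec d (Pmat \<mu> \<rho>) v"
  have "ip d u u = (\<integral>A. ip d (mat_vec d (\<rho> A) v) u \<partial>\<mu>)"
    unfolding u_def by (rule int_ip[OF rep haar])
  also have "... = (\<integral>A. ip d v u \<partial>\<mu>)"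
  proof (rule Bochner_Integration.integral_cong[OF refl])
    fix A assume A: "A \<in> space \<mu>"
    then have AB: "A \<in> U_sub B" using haar_D(2)[OF haar] by simp
    then have AU: "A \<in> unitary_group" using U_sub_unitary by auto
    have "mat_vec d (\<rho> A) u = u" unfolding u_def by (rule Pm_fix[OF rep haar AB])
    then have "ip d (mat_vec d (\<rho> A) v) u = ip d (mat_vec d (\<rho> A) v) (mat_vec d (\<rho> A) u)" by simp
    also have "... = ip d v u" by (rule unitary_ip[OF rep_unitary[OF rep AU]])
    finally show "ip d (mat_vec d (\<rho> A) v) u = ip d v u" .
  qed
  also have "... = ip d v u" using prob_space.prob_space[OF P] by simp
  finally have e: "ip d u u = ip d v u" .
  have "ip d (\<lambda>i. v i - u i) u = 0" using e by (simp add: ip_diff_left)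
  moreover have "ip d u (\<lambda>i. v i - u i) = cnj (ip d (\<lambda>i. v i - u i) u)" by (rule ip_sym)
  ultimately have "ip d u (\<lambda>i. v i - u i) = 0" by simp
  then have "ip d u v - ip d u u = 0" by (simp only: ip_diff_right)
  then have "ip d u v = ip d u u" by simp
  then show ?thesis by (simp add: u_def ip_self)
qed

lemma lap_ip_real:
  assumes rep: "unitary_rep d \<rho>" and haar: "\<And>B. haar_prob (U_sub B) (\<mu> B)" and v: "v \<in> cvec d"
  shows "Im (ip d (mat_vec d (laplacian w \<mu> \<rho>) v) v) = 0"
proof -
  have "Im (ip d (mat_vec d (laplacian w \<mu> \<rho>) v) v) =
      (\<Sum>B\<in>UNIV. w B * (Im (ip d v v) - Im (ip d (mat_vec d (Pmat (\<mu> B) \<rho>) v) v)))"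
    by (simp add: lap_ip[OF v] Im_sum)
  also have "... = 0" by (simp add: ip_self ip_P_real[OF rep haar])
  finally show ?thesis .
qed

lemma lap_Re:
  assumes rep: "unitary_rep d \<rho>" and haar: "\<And>B. haar_prob (U_sub B) (\<mu> B)" and v: "v \<in> cvec d"
  shows "Re (ip d (mat_vec d (laplacian w \<mu> \<rho>) v) v) = (\<Sum>B\<in>UNIV. w B * Fint (\<mu> B) \<rho> d v) / 2"
proof -
  have "Re (ip d (mat_vec d (laplacian w \<mu> \<rho>) v) v) =
      (\<Sum>B\<in>UNIV. w B * (Re (ip d v v) - Re (ip d (mat_vec d (Pmat (\<mu> B) \<rho>) v) v)))"
    by (simp add: lap_ip[OF v] Re_sum)
  also have "... = (\<Sum>B\<in>UNIV. w B * Fint (\<mu> B) \<rho> d v / 2)"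
    by (intro sum.cong refl) (simp add: Fint_expr[OF rep haar] ip_self)
  also have "... = (\<Sum>B\<in>UNIV. w B * Fint (\<mu> B) \<rho> d v) / 2"
    by (simp add: sum_divide_distrib)
  finally show ?thesis .
qed

lemma PU_zero:
  fixes \<rho> :: "'n::finite rep"
  assumes irr: "irreducible_rep d \<rho>" and nt: "\<not> trivial_rep d \<rho>"
    and haar: "haar_prob (U_sub UNIV) \<mu>" and v: "v \<in> cvec d"
  shows "mat_vec d (Pmat \<mu> \<rho>) v = (\<lambda>_. 0)"
proof -
  have rep: "unitary_rep d \<rho>" using irr by (simp add: irreducible_rep_def)
  have d0: "d > 0" using rep by (simp add: unitary_rep_def)
  have irrW: "\<And>W. csubspace_of d W \<Longrightarrow> (\<forall>A\<in>unitary_group. \<forall>v\<in>W. mat_vec d (\<rho> A) v \<in> W)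
          \<Longrightarrow> W = {\<lambda>_. 0} \<or> W = cvec d"
    using irr by (simp add: irreducible_rep_def)
  define P where "P = Pmat \<mu> \<rho>"
  define W where "W = (mat_vec d P) ` cvec d"
  have fixP: "mat_vec d (\<rho> A) (mat_vec d P x) = mat_vec d P x" if "A \<in> unitary_group" for A :: "complex^'n^'n" and x
  proof -
    have "A \<in> U_sub UNIV" using that unfolding unitary_group_U .
    from Pm_fix[OF rep haar this] show ?thesis by (simp add: P_def)
  qed
  have zc: "(\<lambda>_. 0) \<in> cvec d" by (simp add: cvec_def)
  have addc: "(\<lambda>i. x i + y i) \<in> cvec d" if "x \<in> cvec d" "y \<in> cvec d" for x y
    using that by (simp add: cvec_def)
  have scc: "(\<lambda>i. c * x i) \<in> cvec d" if "x \<in> cvec d" for c x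
    using that by (simp add: cvec_def)
  have "csubspace_of d W"
    unfolding csubspace_of_def
  proof (intro conjI ballI allI)
    show "W \<subseteq> cvec d" unfolding W_def using mat_vec_cvec by auto
    show "(\<lambda>_. 0) \<in> W" unfolding W_def using zc mat_vec_zero[of d P] by (metis image_eqI)
  next
    fix x y assume "x \<in> W" "y \<in> W"
    then obtain x' y' where "x' \<in> cvec d" "y' \<in> cvec d" "x = mat_vec d P x'" "y = mat_vec d P y'"
      unfolding W_def by auto
    then show "(\<lambda>i. x i + y i) \<in> W" unfolding W_def
      using addc mat_vec_add[of d P x' y'] by (metis image_eqI)
  next
    fix c x assume "x \<in> W"
    then obtain x' where "x' \<in> cvec d" "x = mat_vec d P x'" unfolding W_def by auto
    then show "(\<lambda>i. c * x i) \<in> W" unfolding W_def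
      using scc mat_vec_scale[of d P c x'] by (metis image_eqI)
  qed
  moreover have "\<forall>A\<in>unitary_group. \<forall>x\<in>W. mat_vec d (\<rho> A) x \<in> W"
    unfolding W_def using fixP by auto
  ultimately have W: "W = {\<lambda>_. 0} \<or> W = cvec d" by (rule irrW)
  show ?thesis
  proof (cases "W = cvec d")
    case True
    then have allfix: "mat_vec d (\<rho> A) u = u" if "A \<in> unitary_group" "u \<in> cvec d" for A :: "complex^'n^'n" and u
      using that fixP unfolding W_def by (metis imageE)
    define e0 :: cvect where "e0 = (\<lambda>i. if i = 0 then 1 else 0)"
    have "d = 1"
    proof (rule ccontr)
      assume "d \<noteq> 1"
      then have d2: "d \<ge> 2" using d0 by simp
      define W' where "W' = {u::cvect. \<forall>i. i \<noteq> 0 \<longrightarrow> u i = 0}"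
      have W'c: "W' \<subseteq> cvec d" unfolding W'_def cvec_def using d0 by auto
      have "csubspace_of d W'"
        unfolding csubspace_of_def using W'c by (auto simp: W'_def)
      moreover have "\<forall>A\<in>unitary_group. \<forall>x\<in>W'. mat_vec d (\<rho> A) x \<in> W'"
        using allfix W'c by auto
      ultimately have "W' = {\<lambda>_. 0} \<or> W' = cvec d" by (rule irrW)
      moreover have "e0 \<in> W'" "e0 \<noteq> (\<lambda>_. 0)" unfolding W'_def e0_def by (auto simp: fun_eq_iff)
      moreover have "(\<lambda>i. if i = 1 then 1 else 0) \<in> cvec d" using d2 by (simp add: cvec_def)
      moreover have "(\<lambda>i::nat. if i = 1 then (1::complex) else 0) \<notin> W'" unfolding W'_def by auto
      ultimately show False by auto
    qed
    have "trivial_rep d \<rho>"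
      unfolding trivial_rep_def
    proof (intro conjI ballI)
      show "d = 1" by fact
      fix A :: "complex^'n^'n" assume A: "A \<in> unitary_group"
      have "e0 \<in> cvec d" using \<open>d = 1\<close> by (simp add: cvec_def e0_def)
      then have "mat_vec d (\<rho> A) e0 0 = e0 0" using allfix[OF A] by simp
      then show "\<rho> A 0 0 = 1" using \<open>d = 1\<close> by (simp add: mat_vec_def e0_def)
    qed
    then show ?thesis using nt by simp
  next
    case False
    then have "W = {\<lambda>_. 0}" using W by simp
    then show ?thesis using v unfolding W_def P_def by auto
  qed
qed



definition Lm :: "nat \<Rightarrow> cmat \<Rightarrow> complex Matrix.mat" where
  "Lm d L = Matrix.mat d d (\<lambda>(i,j). L i j)"

lemma Lm_carrier: "Lm d L \<in> carrier_mat d d"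
  by (simp add: Lm_def)

lemma Lm_mult: "i < d \<Longrightarrow> Matrix.vec_index (Lm d L *\<^sub>v Matrix.vec d v) i = mat_vec d L v i"
  by (simp add: Lm_def mat_vec_def scalar_prod_def atLeast0LessThan)

lemma eig_spec:
  assumes "is_eigenvalue d L k"
  shows "k \<in> spectrum (Lm d L)"
proof -
  obtain v where v: "v \<in> cvec d" "v \<noteq> (\<lambda>_. 0)" "mat_vec d L v = (\<lambda>i. k * v i)"
    using assms by (auto simp: is_eigenvalue_def)
  define vv where "vv = Matrix.vec d v"
  have dr: "dim_row (Lm d L) = d" by (simp add: Lm_def)
  have c: "vv \<in> carrier_vec d" by (simp add: vv_def)
  have nz: "vv \<noteq> 0\<^sub>v d"
  proof
    assume h: "vv = 0\<^sub>v d"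
    have "v i = 0" for i
    proof (cases "i < d")
      case True
      then have "Matrix.vec_index vv i = 0" using h by simp
      then show ?thesis using True by (simp add: vv_def)
    next
      case False then show ?thesis using v(1) by (simp add: cvec_def)
    qed
    then show False using v(2) by auto
  qed
  have "Lm d L *\<^sub>v vv = k \<cdot>\<^sub>v vv"
  proof (rule eq_vecI)
    fix i assume "i < dim_vec (k \<cdot>\<^sub>v vv)"
    then have i: "i < d" by (simp add: vv_def)
    have "Matrix.vec_index (Lm d L *\<^sub>v vv) i = mat_vec d L v i" unfolding vv_def by (rule Lm_mult[OF i])
    also have "... = k * v i" using v(3) by simp
    also have "... = Matrix.vec_index (k \<cdot>\<^sub>v vv) i" using i by (simp add: vv_def)
    finally show "Matrix.vec_index (Lm d L *\<^sub>v vv) i = Matrix.vec_index (k \<cdot>\<^sub>v vv) i" .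
  next
    show "dim_vec (Lm d L *\<^sub>v vv) = dim_vec (k \<cdot>\<^sub>v vv)" by (simp add: dr vv_def)
  qed
  then have "eigenvector (Lm d L) vv k" using c nz dr by (simp add: eigenvector_def)
  then show ?thesis by (auto simp: spectrum_def eigenvalue_def)
qed

lemma spec_eig:
  assumes "k \<in> spectrum (Lm d L)"
  shows "is_eigenvalue d L k"
proof -
  have dr: "dim_row (Lm d L) = d" by (simp add: Lm_def)
  obtain vv where ev: "eigenvector (Lm d L) vv k" using assms by (auto simp: spectrum_def eigenvalue_def)
  then have c: "vv \<in> carrier_vec d" and nz: "vv \<noteq> 0\<^sub>v d" and eq: "Lm d L *\<^sub>v vv = k \<cdot>\<^sub>v vv"
    by (auto simp: eigenvector_def dr)
  have dv: "dim_vec vv = d" using c by simp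
  define v where "v = (\<lambda>i. if i < d then Matrix.vec_index vv i else 0)"
  have vv: "vv = Matrix.vec d v"
    by (rule eq_vecI) (auto simp: v_def dv)
  have vc: "v \<in> cvec d" by (simp add: v_def cvec_def)
  have vnz: "v \<noteq> (\<lambda>_. 0)"
  proof
    assume h: "v = (\<lambda>_. 0)"
    have "vv = 0\<^sub>v d"
    proof (rule eq_vecI)
      fix i assume "i < dim_vec (0\<^sub>v d)"
      then have i: "i < d" by simp
      have "v i = 0" using h by simp
      then show "Matrix.vec_index vv i = Matrix.vec_index (0\<^sub>v d) i" using i by (simp add: v_def)
    next
      show "dim_vec vv = dim_vec (0\<^sub>v d)" by (simp add: dv)
    qed
    then show False using nz by simp
  qed
  have "mat_vec d L v = (\<lambda>i. k * v i)"
  proof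
    fix i show "mat_vec d L v i = k * v i"
    proof (cases "i < d")
      case True
      have "mat_vec d L v i = Matrix.vec_index (Lm d L *\<^sub>v vv) i" unfolding vv by (rule Lm_mult[OF True, symmetric])
      also have "... = k * v i" using True by (simp add: eq v_def dv)
      finally show ?thesis .
    next
      case False then show ?thesis by (simp add: mat_vec_def v_def)
    qed
  qed
  then show ?thesis using vc vnz by (auto simp: is_eigenvalue_def)
qed

theorem proposition5p2:
  fixes w :: "'n::finite set \<Rightarrow> real"
    and \<mu> :: "'n set \<Rightarrow> (complex^'n^'n) measure"
  assumes n2: "CARD('n) \<ge> 2"
    and nonneg: "\<And>B. w B \<ge> 0"
    and conn: "hypergraph_connected w"
    and haar: "\<And>B. haar_prob (U_sub B) (\<mu> B)"
  shows "\<exists>\<epsilon>>0. \<forall>(d::nat) (\<rho> :: complex^'n^'n \<Rightarrow> cmat).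
           irreducible_rep d \<rho> \<and> \<not> trivial_rep d \<rho> \<longrightarrow>
           lambda_min d (laplacian w \<mu> \<rho>) \<ge> \<epsilon>"
proof -
  obtain N where N: "unitary_group \<subseteq> gen w N" using gen_all[OF n2 conn] by blast
  obtain i0 :: 'n where True by simp
  have "{i0} \<noteq> UNIV"
  proof
    assume h: "{i0} = UNIV"
    have "CARD('n) = card {i0}" by (simp only: h)
    then show False using n2 by simp
  qed
  then obtain B0 where B0: "w B0 > 0" using conn_cross[OF conn, of "{i0}"] by auto
  define Wp where "Wp = {B. w B > 0}"
  have finWp: "finite (w ` Wp)" by simp
  have neWp: "w ` Wp \<noteq> {}" using B0 by (auto simp: Wp_def)
  define wmin where "wmin = Min (w ` Wp)"
  have "wmin \<in> w ` Wp" unfolding wmin_def by (rule Min_in[OF finWp neWp])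
  then have wmin_pos: "wmin > 0" by (auto simp: Wp_def)
  have wmin_le: "wmin \<le> w B" if "w B > 0" for B
    unfolding wmin_def using that by (intro Min_le finWp) (auto simp: Wp_def)
  define \<epsilon> where "\<epsilon> = wmin / (4 * ((real N)\<^sup>2 + 1))"
  have den: "4 * ((real N)\<^sup>2 + 1) > 0" by (simp add: add_nonneg_pos)
  have eps_pos: "\<epsilon> > 0" unfolding \<epsilon>_def using wmin_pos den by simp
  show ?thesis
  proof (intro exI[of _ \<epsilon>] conjI allI impI)
    show "\<epsilon> > 0" by (rule eps_pos)
    fix d :: nat and \<rho> :: "complex^'n^'n \<Rightarrow> cmat"
    assume "irreducible_rep d \<rho> \<and> \<not> trivial_rep d \<rho>"
    then have irr: "irreducible_rep d \<rho>" and nt: "\<not> trivial_rep d \<rho>" by auto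
    have rep: "unitary_rep d \<rho>" using irr by (simp add: irreducible_rep_def)
    have d0: "d > 0" using rep by (simp add: unitary_rep_def)
    define L where "L = laplacian w \<mu> \<rho>"
    define E where "E = {x::real. is_eigenvalue d L (complex_of_real x)}"
    have bound: "\<epsilon> \<le> x" if "x \<in> E" for x
    proof -
      have "is_eigenvalue d L (complex_of_real x)" using that by (simp add: E_def)
      then obtain v where v: "v \<in> cvec d" "v \<noteq> (\<lambda>_. 0)" "mat_vec d L v = (\<lambda>i. complex_of_real x * v i)"
        unfolding is_eigenvalue_def by blast
      have npos: "nsq d v > 0" by (rule nsq_pos[OF v(1,2)])
      define T where "T = (\<Sum>B\<in>UNIV. w B * Fint (\<mu> B) \<rho> d v)"
      have "Re (ip d (mat_vec d L v) v) = x * nsq d v"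
        using v(3) by (simp add: ip_scale_left ip_self)
      moreover have "Re (ip d (mat_vec d L v) v) = T / 2"
        unfolding L_def T_def by (rule lap_Re[OF rep haar v(1)])
      ultimately have xT: "T = 2 * x * nsq d v" by simp
      have Fnn: "\<And>B. Fint (\<mu> B) \<rho> d v \<ge> 0" by (rule Fint_nonneg)
      have T0: "T \<ge> 0" unfolding T_def using nonneg Fnn by (intro sum_nonneg mult_nonneg_nonneg) auto
      have x0: "x \<ge> 0"
      proof (rule ccontr)
        assume "\<not> x \<ge> 0"
        then have "x * nsq d v < 0" using npos by (simp add: mult_neg_pos)
        then show False using xT T0 by linarith
      qed
      have FB: "Fint (\<mu> B) \<rho> d v \<le> T / wmin" if "w B > 0" for B
      proof -
        have "w B * Fint (\<mu> B) \<rho> d v \<le> T"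
          unfolding T_def using nonneg Fnn
          by (intro member_le_sum) (auto intro: mult_nonneg_nonneg)
        moreover have "wmin * Fint (\<mu> B) \<rho> d v \<le> w B * Fint (\<mu> B) \<rho> d v"
          using wmin_le[OF that] Fnn by (intro mult_right_mono) auto
        ultimately have "wmin * Fint (\<mu> B) \<rho> d v \<le> T" by linarith
        then show ?thesis using wmin_pos by (simp add: pos_le_divide_eq mult.commute)
      qed
      define s where "s = sqrt (4 * T / wmin)"
      have s2: "s\<^sup>2 = 4 * T / wmin" unfolding s_def using T0 wmin_pos by simp
      have sbound: "dv d \<rho> v a \<le> s" if "w B > 0" "a \<in> U_sub B" for B a
      proof -
        have "(dv d \<rho> v a)\<^sup>2 \<le> 4 * Fint (\<mu> B) \<rho> d v"
          by (rule pointwise_bound[OF rep haar that(2)])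
        also have "... \<le> 4 * T / wmin" using FB[OF that(1)] by simp
        finally show ?thesis unfolding s_def by (rule real_le_rsqrt)
      qed
      have sq: "(dv d \<rho> v g)\<^sup>2 \<le> (real N)\<^sup>2 * (4 * T / wmin)" if "g \<in> unitary_group" for g
      proof -
        have gN: "g \<in> gen w N" using N that by auto
        have "dv d \<rho> v g \<le> real N * s" using gen_bound[OF rep v(1) sbound gN] .
        then have "(dv d \<rho> v g)\<^sup>2 \<le> (real N * s)\<^sup>2"
          using dv_nonneg by (intro power_mono) auto
        also have "... = (real N)\<^sup>2 * (4 * T / wmin)" by (simp add: power_mult_distrib s2)
        finally show ?thesis .
      qed
      have PUz: "mat_vec d (Pmat (\<mu> UNIV) \<rho>) v = (\<lambda>_. 0)"
        by (rule PU_zero[OF irr nt haar v(1)])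
      have FU: "Fint (\<mu> UNIV) \<rho> d v = 2 * nsq d v"
        using Fint_expr[OF rep haar, of UNIV v] PUz by (simp add: ip_def)
      have P: "prob_space (\<mu> UNIV)" by (rule haar_D(1)[OF haar])
      have "Fint (\<mu> UNIV) \<rho> d v \<le> (\<integral>A. (real N)\<^sup>2 * (4 * T / wmin) \<partial>(\<mu> UNIV))"
        unfolding Fint_def
      proof (rule Bochner_Integration.integral_mono)
        show "integrable (\<mu> UNIV) (\<lambda>A. (dv d \<rho> v A)\<^sup>2)" by (rule dv_sq_integrable[OF rep haar])
        show "integrable (\<mu> UNIV) (\<lambda>A. (real N)\<^sup>2 * (4 * T / wmin))"
          by (rule finite_measure.integrable_const[OF haar_finite[OF haar]])
        fix A assume "A \<in> space (\<mu> UNIV)"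
        then have "A \<in> U_sub UNIV" using haar_D(2)[OF haar] by simp
        then have "A \<in> unitary_group" using U_sub_unitary by blast
        then show "(dv d \<rho> v A)\<^sup>2 \<le> (real N)\<^sup>2 * (4 * T / wmin)" by (rule sq)
      qed
      also have "... = (real N)\<^sup>2 * (4 * T / wmin)" using prob_space.prob_space[OF P] by simp
      finally have h1: "2 * nsq d v \<le> (real N)\<^sup>2 * (4 * T / wmin)" using FU by simp
      then have "wmin * (2 * nsq d v) \<le> (real N)\<^sup>2 * (4 * T)"
        using wmin_pos by (simp add: field_simps)
      also have "... = (4 * (real N)\<^sup>2 * x) * (2 * nsq d v)" using xT by (simp add: algebra_simps)
      finally have "wmin * (2 * nsq d v) \<le> (4 * (real N)\<^sup>2 * x) * (2 * nsq d v)" .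
      then have h2: "wmin \<le> 4 * (real N)\<^sup>2 * x" using npos by (simp add: mult_le_cancel_right mult_ac)
      have "4 * (real N)\<^sup>2 * x \<le> 4 * ((real N)\<^sup>2 + 1) * x" using x0 by (simp add: mult_right_mono)
      then have "wmin \<le> 4 * ((real N)\<^sup>2 + 1) * x" using h2 by linarith
      then show "\<epsilon> \<le> x" unfolding \<epsilon>_def using den by (simp add: divide_le_eq mult.commute)
    qed
    have finE: "finite E"
    proof -
      have "E \<subseteq> Re ` spectrum (Lm d L)"
      proof
        fix x assume "x \<in> E"
        then have "complex_of_real x \<in> spectrum (Lm d L)" by (auto simp: E_def intro: eig_spec)
        then show "x \<in> Re ` spectrum (Lm d L)" by (metis Re_complex_of_real image_eqI)
      qed
      moreover have "finite (Re ` spectrum (Lm d L))"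
        using card_finite_spectrum(1)[OF Lm_carrier] by simp
      ultimately show ?thesis by (rule finite_subset)
    qed
    have neE: "E \<noteq> {}"
    proof -
      obtain k where k: "k \<in> spectrum (Lm d L)" using spectrum_non_empty[OF Lm_carrier d0] by auto
      have "is_eigenvalue d L k" by (rule spec_eig[OF k])
      then obtain v where v: "v \<in> cvec d" "v \<noteq> (\<lambda>_. 0)" "mat_vec d L v = (\<lambda>i. k * v i)"
        unfolding is_eigenvalue_def by blast
      have npos: "nsq d v > 0" by (rule nsq_pos[OF v(1,2)])
      have "Im (ip d (mat_vec d L v) v) = 0" unfolding L_def by (rule lap_ip_real[OF rep haar v(1)])
      then have "Im k * nsq d v = 0" using v(3) by (simp add: ip_scale_left ip_self)
      then have "Im k = 0" using npos by simp
      then have "k = complex_of_real (Re k)" by (simp add: complex_eq_iff)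
      then have "Re k \<in> E" using \<open>is_eigenvalue d L k\<close> by (simp add: E_def)
      then show ?thesis by auto
    qed
    have "Min E \<in> E" by (rule Min_in[OF finE neE])
    then have "\<epsilon> \<le> Min E" by (rule bound)
    then show "\<epsilon> \<le> lambda_min d (laplacian w \<mu> \<rho>)" by (simp add: lambda_min_def E_def L_def)
  qed
qed

end
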